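(* Let $c\ge 1$ be the number of labels, $f$ a base multi-label classifier, $1\le k'\le c$, $1\le k\le c$, $\sigma>0$, and $\mathbf{x}\in\mathbb{R}^m$. Let $L(\mathbf{x})=\{a_1,\dots,a_d\}\subseteq\{1,\dots,c\}$ be a set of $d\ge1$ labels. Suppose we are given numbers $\underline{p_{i}}\in[0,1]$ for $i\in L(\mathbf{x})$ with $\underline{p_i}\le p_i$, and numbers $\overline{p}_j\in[0,1]$ for $j\in\{1,\dots,c\}\setminus L(\mathbf{x})$ with $p_j\le\overline{p}_j$. Index so that $\underline{p_{a_1}}\ge\cdots\ge\underline{p_{a_d}}$, and let $b_1,\dots,b_{c-d}$ be an enumeration of $\{1,\dots,c\}\setminus L(\mathbf{x})$ with $\overline{p}_{b_1}\ge\overline{p}_{b_2}\ge\cdots\ge\overline{p}_{b_{c-d}}$ (ties broken arbitrarily); by convention $\overline{p}_{b_l}:=0$ for $l>c-d$. For $e'\in\{1,\dots,\min\{d,k\}\}$ set $\eta=d-e'+1$, $s=k-e'+1$, $\underline{p_{A_u}}=\sum_{l=e'}^{e'+u-1}\underline{p_{a_l}}$ for $1\le u\le\eta$, and $\overline{p}_{B_v}=\sum_{l=s-v+1}^{s}\overline{p}_{b_l}$ for $1\le v\le s$, and assume $\overline{p}_{B_v}\le k'$ for all such $v$. Let $R\ge 0$ and let $e$ be the largest $e'\in\{1,\dots,\min\{d,k\}\}$ satisfying $$\max\Big\{\Phi\big(\Phi^{-1}(\underline{p_{a_{e'}}})-\tfrac{R}{\sigma}\big),\ \max_{u=1}^{\eta}\tfrac{k'}{u}\,\Phi\big(\Phi^{-1}(\tfrac{\underline{p_{A_u}}}{k'})-\tfrac{R}{\sigma}\big)\Big\}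 > \min\Big\{\Phi\big(\Phi^{-1}(\overline{p}_{b_s})+\tfrac{R}{\sigma}\big),\ \min_{v=1}^{s}\tfrac{k'}{v}\,\Phi\big(\Phi^{-1}(\tfrac{\overline{p}_{B_v}}{k'})+\tfrac{R}{\sigma}\big)\Big\},$$ or $e=0$ if no such $e'$ exists. Then for every perturbation $\delta\in\mathbb{R}^m$ with $\|\delta\|_2\le R$, $$|L(\mathbf{x})\cap g_k(\mathbf{x}+\delta)|\ge e .$$
   Context: A base multi-label classifier $f$ with parameter $k'$ assigns to every input $\mathbf{w}\in\mathbb{R}^m$ a set $f_{k'}(\mathbf{w})\subseteq\{1,\dots,c\}$ of exactly $k'$ labels (measurably in $\mathbf{w}$). Let $\epsilon\sim\mathcal{N}(0,\sigma^2 I)$ be isotropic Gaussian noise. The label probability of label $i$ at input $\mathbf{x}$ is $p_i=\Pr(i\in f_{k'}(\mathbf{x}+\epsilon))$; in general, for any input $\mathbf{z}$, write $p_i(\mathbf{z})=\Pr(i\in f_{k'}(\mathbf{z}+\epsilon))$, so $p_i=p_i(\mathbf{x})$. The smoothed multi-label classifier $g$ outputs $g_k(\mathbf{z})$, the set of $k$ labels with the largest values of $p_i(\mathbf{z})$ (ties broken arbitrarily). $\Phi$ is the standard normal CDF and $\Phi^{-1}$ its inverse, with conventions $\Phi^{-1}(0)=-\infty$, $\Phi^{-1}(1)=+\infty$, $\Phi(-\infty)=0$, $\Phi(+\infty)=1$. *)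

theory Defs
  imports "HOL-Probability.Probability"
begin

definition Phi :: "real \<Rightarrow> real" where
  "Phi = cdf (density lborel std_normal_density)"

definition Phi_inv :: "real \<Rightarrow> real" where
  "Phi_inv p = (THE x. Phi x = p)"

text \<open>Phi (Phi_inv p + t) for p in [0,1], with the conventions
  Phi_inv 0 = -infinity, Phi_inv 1 = +infinity, Phi(-infinity) = 0, Phi(+infinity) = 1
  (t is always a finite real).\<close>
definition Phi_shift :: "real \<Rightarrow> real \<Rightarrow> real" where
  "Phi_shift p t = (if p \<le> 0 then 0 else if p \<ge> 1 then 1 else Phi (Phi_inv p + t))"

definition gauss :: "real \<Rightarrow> 'a::euclidean_space measure" where
  "gauss \<sigma> = density lborel (\<lambda>y. ennreal ((2 * pi * \<sigma>\<^sup>2) powr (- real DIM('a) / 2)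
                                          * exp (- (norm y)\<^sup>2 / (2 * \<sigma>\<^sup>2))))"

definition label_prob :: "('a::euclidean_space \<Rightarrow> nat set) \<Rightarrow> real \<Rightarrow> 'a \<Rightarrow> nat \<Rightarrow> real" where
  "label_prob f \<sigma> z i = measure (gauss \<sigma>) {\<epsilon>. i \<in> f (z + \<epsilon>)}"

text \<open>G is a possible output of the smoothed classifier g_k at z (ties broken arbitrarily):
  a set of k labels among {1..c} whose label probabilities are the k largest.\<close>
definition is_smoothed_output ::
  "nat \<Rightarrow> ('a::euclidean_space \<Rightarrow> nat set) \<Rightarrow> real \<Rightarrow> nat \<Rightarrow> 'a \<Rightarrow> nat set \<Rightarrow> bool" where
  "is_smoothed_output c f \<sigma> k z G \<longleftrightarrow>
     G \<subseteq> {1..c} \<and> card G = k \<and>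
     (\<forall>i\<in>G. \<forall>j\<in>{1..c} - G. label_prob f \<sigma> z j \<le> label_prob f \<sigma> z i)"

definition pbar :: "nat \<Rightarrow> nat \<Rightarrow> (nat \<Rightarrow> nat) \<Rightarrow> (nat \<Rightarrow> real) \<Rightarrow> nat \<Rightarrow> real" where
  "pbar c d b pup l = (if l \<le> c - d then pup (b l) else 0)"

definition pA :: "(nat \<Rightarrow> nat) \<Rightarrow> (nat \<Rightarrow> real) \<Rightarrow> nat \<Rightarrow> nat \<Rightarrow> real" where
  "pA a plow e' u = (\<Sum>l = e'..e' + u - 1. plow (a l))"

definition pB :: "nat \<Rightarrow> nat \<Rightarrow> nat \<Rightarrow> (nat \<Rightarrow> nat) \<Rightarrow> (nat \<Rightarrow> real) \<Rightarrow> nat \<Rightarrow> nat \<Rightarrow> real" where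
  "pB c d k b pup e' v = (let s = k - e' + 1 in (\<Sum>l = s - v + 1..s. pbar c d b pup l))"

definition cert_cond ::
  "nat \<Rightarrow> nat \<Rightarrow> nat \<Rightarrow> nat \<Rightarrow> real \<Rightarrow> real \<Rightarrow> (nat \<Rightarrow> nat) \<Rightarrow> (nat \<Rightarrow> nat) \<Rightarrow>
   (nat \<Rightarrow> real) \<Rightarrow> (nat \<Rightarrow> real) \<Rightarrow> nat \<Rightarrow> bool" where
  "cert_cond c d k k' \<sigma> R a b plow pup e' \<longleftrightarrow>
     (let \<eta> = d - e' + 1; s = k - e' + 1 in
      max (Phi_shift (plow (a e')) (- R / \<sigma>))
          (Max ((\<lambda>u. real k' / real u * Phi_shift (pA a plow e' u / real k') (- R / \<sigma>)) ` {1..\<eta>}))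
      > min (Phi_shift (pbar c d b pup s) (R / \<sigma>))
          (Min ((\<lambda>v. real k' / real v * Phi_shift (pB c d k b pup e' v / real k') (R / \<sigma>)) ` {1..s})))"

definition cert_e ::
  "nat \<Rightarrow> nat \<Rightarrow> nat \<Rightarrow> nat \<Rightarrow> real \<Rightarrow> real \<Rightarrow> (nat \<Rightarrow> nat) \<Rightarrow> (nat \<Rightarrow> nat) \<Rightarrow>
   (nat \<Rightarrow> real) \<Rightarrow> (nat \<Rightarrow> real) \<Rightarrow> nat" where
  "cert_e c d k k' \<sigma> R a b plow pup =
     Max ({0} \<union> {e' \<in> {1..min d k}. cert_cond c d k k' \<sigma> R a b plow pup e'})"

end

theory Submission
  imports Defs
begin



lemma rho_prod:
  fixes f :: "'a::euclidean_space \<Rightarrow> real" assumes s: "\<sigma> > 0"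
  shows "(2*pi*\<sigma>\<^sup>2) powr (- real DIM('a)/2) * exp (-(norm (\<Sum>b\<in>Basis. f b *\<^sub>R b))\<^sup>2 / (2*\<sigma>\<^sup>2))
     = (\<Prod>b\<in>(Basis::'a set). normal_density 0 \<sigma> (f b))"
proof -
  have n: "(norm (\<Sum>b\<in>(Basis::'a set). f b *\<^sub>R b))\<^sup>2 = (\<Sum>b\<in>Basis. (f b)\<^sup>2)"
    by (subst norm_sum_Pythagorean) (auto simp: pairwise_def orthogonal_def inner_Basis)
  have pos: "2*pi*\<sigma>\<^sup>2 > 0" using s by (simp add: pi_gt_zero)
  have "(\<Prod>b\<in>(Basis::'a set). normal_density 0 \<sigma> (f b))
      = (\<Prod>b\<in>(Basis::'a set). (2*pi*\<sigma>\<^sup>2) powr (-1/2) * exp (-(f b)\<^sup>2/(2*\<sigma>\<^sup>2)))"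
    using pos by (intro prod.cong refl) (simp add: normal_density_def powr_minus_divide powr_half_sqrt)
  also have "\<dots> = ((2*pi*\<sigma>\<^sup>2) powr (-1/2)) ^ DIM('a) * exp (\<Sum>b\<in>(Basis::'a set). -(f b)\<^sup>2/(2*\<sigma>\<^sup>2))"
    by (simp add: prod.distrib exp_sum)
  also have "((2*pi*\<sigma>\<^sup>2) powr (-1/2)) ^ DIM('a) = (2*pi*\<sigma>\<^sup>2) powr (- real DIM('a)/2)"
  proof -
    have "((2*pi*\<sigma>\<^sup>2) powr - (1 / 2)) ^ DIM('a) = ((2*pi*\<sigma>\<^sup>2) powr - (1 / 2)) powr real DIM('a)" using pos by (subst powr_realpow) auto
    also have "\<dots> = (2*pi*\<sigma>\<^sup>2) powr (- (1/2) * real DIM('a))" by (simp add: powr_powr)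
    finally show ?thesis by simp
  qed
  also have "(\<Sum>b\<in>(Basis::'a set). -(f b)\<^sup>2/(2*\<sigma>\<^sup>2)) = -(\<Sum>b\<in>Basis. (f b)\<^sup>2) / (2*\<sigma>\<^sup>2)"
    by (simp add: sum_divide_distrib sum_negf)
  finally show ?thesis using n by simp
qed



definition Nd :: "real \<Rightarrow> real measure" where
  "Nd \<sigma> = density lborel (\<lambda>x. ennreal (normal_density 0 \<sigma> x))"

lemma prob_space_Nd: "\<sigma> > 0 \<Longrightarrow> prob_space (Nd \<sigma>)"
  unfolding Nd_def by (rule prob_space_normal_density)

lemma sets_Nd[measurable_cong, simp]: "sets (Nd \<sigma>) = sets borel"
  by (simp add: Nd_def)

lemma indicator_PiE_prod:
  assumes "f \<in> extensional I" "finite I"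
  shows "indicator (Pi\<^sub>E I A) f = (\<Prod>i\<in>I. indicator (A i) (f i) :: ennreal)"
proof (cases "f \<in> Pi I A")
  case True then show ?thesis using assms by (auto simp: indicator_def PiE_def intro!: prod.neutral)
next
  case False then show ?thesis using assms by (auto simp: indicator_def PiE_def prod_zero_iff)
qed

lemma density_PiM_Nd:
  assumes s: "\<sigma> > 0"
  shows "density (PiM (Basis::'a::euclidean_space set) (\<lambda>_. lborel))
           (\<lambda>f. \<Prod>b\<in>Basis. ennreal (normal_density 0 \<sigma> (f b))) = PiM Basis (\<lambda>_. Nd \<sigma>)"
proof -
  interpret N: prob_space "Nd \<sigma>" using prob_space_Nd[OF s] .
  interpret P: product_sigma_finite "\<lambda>_::'a. Nd \<sigma>" 
    by standard
  interpret L: product_sigma_finite "\<lambda>_::'a. lborel::real measure" 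
    by standard
  show ?thesis
  proof (rule P.PiM_eqI)
    show "finite (Basis::'a set)" by simp
    show "sets (density (Pi\<^sub>M Basis (\<lambda>_. lborel)) (\<lambda>f. \<Prod>b\<in>Basis. ennreal (normal_density 0 \<sigma> (f b))))
       = sets (Pi\<^sub>M (Basis::'a set) (\<lambda>_. Nd \<sigma>))"
      by (simp cong: sets_PiM_cong)
    fix A assume A: "\<And>i. i \<in> (Basis::'a set) \<Longrightarrow> A i \<in> sets (Nd \<sigma>)"
    have AP: "Pi\<^sub>E Basis A \<in> sets (Pi\<^sub>M (Basis::'a set) (\<lambda>_. lborel))"
      using A by (intro sets_PiM_I_finite) auto
    have "emeasure (density (Pi\<^sub>M Basis (\<lambda>_. lborel)) (\<lambda>f. \<Prod>b\<in>Basis. ennreal (normal_density 0 \<sigma> (f b)))) (Pi\<^sub>E Basis A)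
      = (\<integral>\<^sup>+f. (\<Prod>b\<in>Basis. ennreal (normal_density 0 \<sigma> (f b))) * indicator (Pi\<^sub>E Basis A) f \<partial>Pi\<^sub>M (Basis::'a set) (\<lambda>_. lborel))"
      using AP by (subst emeasure_density) auto
    also have "\<dots> = (\<integral>\<^sup>+f. (\<Prod>b\<in>Basis. ennreal (normal_density 0 \<sigma> (f b)) * indicator (A b) (f b)) \<partial>Pi\<^sub>M (Basis::'a set) (\<lambda>_. lborel))"
      by (intro nn_integral_cong) (auto simp: space_PiM PiE_iff indicator_PiE_prod prod.distrib)
    also have "\<dots> = (\<Prod>b\<in>Basis. (\<integral>\<^sup>+x. ennreal (normal_density 0 \<sigma> x) * indicator (A b) x \<partial>lborel))"
      using A by (subst L.product_nn_integral_prod) auto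
    also have "\<dots> = (\<Prod>b\<in>Basis. emeasure (Nd \<sigma>) (A b))"
      using A by (intro prod.cong refl) (simp add: Nd_def emeasure_density)
    finally show "emeasure (density (Pi\<^sub>M Basis (\<lambda>_. lborel)) (\<lambda>f. \<Prod>b\<in>Basis. ennreal (normal_density 0 \<sigma> (f b)))) (Pi\<^sub>E Basis A)
      = (\<Prod>b\<in>Basis. emeasure (Nd \<sigma>) (A b))" .
  qed
qed


lemma gauss_eq_PiM:
  assumes s: "\<sigma> > 0"
  shows "(gauss \<sigma> :: 'a::euclidean_space measure) = distr (PiM Basis (\<lambda>_. Nd \<sigma>)) borel (\<lambda>f. \<Sum>b\<in>Basis. f b *\<^sub>R b)"
proof -
  let ?P = "PiM (Basis::'a set) (\<lambda>_. lborel::real measure)"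
  let ?\<Phi> = "\<lambda>f. \<Sum>b\<in>(Basis::'a set). f b *\<^sub>R b"
  let ?\<rho> = "\<lambda>y::'a. ennreal ((2*pi*\<sigma>\<^sup>2) powr (- real DIM('a)/2) * exp (-(norm y)\<^sup>2/(2*\<sigma>\<^sup>2)))"
  have "(gauss \<sigma> :: 'a measure) = density lborel ?\<rho>" by (simp add: gauss_def)
  also have "\<dots> = density (distr ?P borel ?\<Phi>) ?\<rho>" by (subst lborel_eq[where 'a='a]) simp
  also have "\<dots> = distr (density ?P (\<lambda>f. ?\<rho> (?\<Phi> f))) borel ?\<Phi>" by (rule density_distr) auto
  also have "density ?P (\<lambda>f. ?\<rho> (?\<Phi> f)) = density ?P (\<lambda>f. \<Prod>b\<in>Basis. ennreal (normal_density 0 \<sigma> (f b)))"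
  proof -
    have eq: "?\<rho> (?\<Phi> f) = (\<Prod>b\<in>Basis. ennreal (normal_density 0 \<sigma> (f b)))" for f
      by (subst rho_prod[OF s]) (rule prod_ennreal[symmetric], simp)
    show ?thesis by (simp only: eq)
  qed
  also have "\<dots> = PiM Basis (\<lambda>_. Nd \<sigma>)" by (rule density_PiM_Nd[OF s])
  finally show ?thesis .
qed


lemma PiM_Nd_indep:
  assumes s: "\<sigma> > 0"
  shows "prob_space.indep_vars (PiM (Basis::'a::euclidean_space set) (\<lambda>_. Nd \<sigma>)) (\<lambda>_. borel) (\<lambda>b \<omega>. \<omega> b) Basis"
proof -
  let ?\<Pi> = "PiM (Basis::'a set) (\<lambda>_. Nd \<sigma>)"
  interpret prob_space ?\<Pi> by (rule prob_space_PiM) (simp add: prob_space_Nd[OF s])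
  have nonempty: "(Basis::'a set) \<noteq> {}" by simp
  have comp: "distr ?\<Pi> borel (\<lambda>\<omega>. \<omega> i) = Nd \<sigma>" if "i \<in> Basis" for i
  proof -
    have "distr ?\<Pi> borel (\<lambda>\<omega>. \<omega> i) = distr ?\<Pi> (Nd \<sigma>) (\<lambda>\<omega>. \<omega> i)"
      by (rule distr_cong) auto
    also have "\<dots> = Nd \<sigma>" using that by (intro distr_PiM_component) (auto simp: prob_space_Nd[OF s])
    finally show ?thesis .
  qed
  show ?thesis
  proof (subst indep_vars_iff_distr_eq_PiM[OF nonempty])
    show "random_variable borel (\<lambda>\<omega>. \<omega> i)" for i
    proof (cases "i \<in> Basis")
      case True then show ?thesis by measurable
    next
      case False
      then have "\<And>\<omega>. \<omega> \<in> space ?\<Pi> \<Longrightarrow> \<omega> i = undefined" by (auto simp: space_PiM PiE_def extensional_def)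
      then show ?thesis by (subst measurable_cong[where g="\<lambda>_. undefined"]) auto
    qed
    have "distr ?\<Pi> (Pi\<^sub>M Basis (\<lambda>i. borel)) (\<lambda>x. restrict (\<lambda>i. x i) Basis)
        = distr ?\<Pi> ?\<Pi> (\<lambda>x. x)"
      by (intro distr_cong refl sets_PiM_cong) (auto simp: space_PiM PiE_def extensional_restrict)
    also have "\<dots> = ?\<Pi>" by simp
    also have "\<dots> = Pi\<^sub>M Basis (\<lambda>i. distr ?\<Pi> borel (\<lambda>\<omega>. \<omega> i))"
      by (intro PiM_cong refl) (simp add: comp)
    finally show "distr ?\<Pi> (Pi\<^sub>M Basis (\<lambda>i. borel)) (\<lambda>x. restrict (\<lambda>i. x i) Basis)
        = Pi\<^sub>M Basis (\<lambda>i. distr ?\<Pi> borel (\<lambda>\<omega>. \<omega> i))" .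
  qed
qed


lemma PiM_proj_normal:
  assumes s: "\<sigma> > 0" and u: "u \<noteq> (0::'a::euclidean_space)"
  shows "distributed (PiM (Basis::'a set) (\<lambda>_. Nd \<sigma>)) lborel (\<lambda>\<omega>. (\<Sum>b\<in>Basis. \<omega> b *\<^sub>R b) \<bullet> u)
           (\<lambda>x. ennreal (normal_density 0 (\<sigma> * norm u) x))"
proof -
  let ?\<Pi> = "PiM (Basis::'a set) (\<lambda>_. Nd \<sigma>)"
  interpret prob_space ?\<Pi> by (rule prob_space_PiM) (simp add: prob_space_Nd[OF s])
  define I where "I = {b\<in>(Basis::'a set). b \<bullet> u \<noteq> 0}"
  have fI: "finite I" by (simp add: I_def)
  have I0: "I \<noteq> {}" using u euclidean_all_zero_iff[of u] by (auto simp: I_def inner_commute)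
  have ind: "indep_vars (\<lambda>_. borel) (\<lambda>b \<omega>. (b \<bullet> u) * \<omega> b) I"
  proof -
    have "indep_vars (\<lambda>_. borel) (\<lambda>b \<omega>. \<omega> b) I"
      using PiM_Nd_indep[OF s] by (rule indep_vars_subset) (auto simp: I_def)
    then show ?thesis
      by (rule indep_vars_compose2[where X="\<lambda>b \<omega>. \<omega> b" and Y="\<lambda>b x. (b \<bullet> u) * x"]) auto
  qed
  have comp: "distributed ?\<Pi> lborel (\<lambda>\<omega>. \<omega> b) (\<lambda>x. ennreal (normal_density 0 \<sigma> x))" if "b \<in> Basis" for b
  proof -
    have "distr ?\<Pi> lborel (\<lambda>\<omega>. \<omega> b) = distr ?\<Pi> (Nd \<sigma>) (\<lambda>\<omega>. \<omega> b)"
      by (rule distr_cong) auto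
    also have "\<dots> = Nd \<sigma>" using that by (intro distr_PiM_component) (auto simp: prob_space_Nd[OF s])
    finally show ?thesis using that unfolding distributed_def Nd_def by auto
  qed
  have each: "distributed ?\<Pi> lborel (\<lambda>\<omega>. (b \<bullet> u) * \<omega> b) (normal_density 0 (\<bar>b \<bullet> u\<bar> * \<sigma>))" if "b \<in> I" for b
    using normal_density_affine[OF comp[of b] s, of "b \<bullet> u" 0] that by (auto simp: I_def)
  have sum: "distributed ?\<Pi> lborel (\<lambda>\<omega>. \<Sum>b\<in>I. (b \<bullet> u) * \<omega> b)
      (normal_density (\<Sum>b\<in>I. 0) (sqrt (\<Sum>b\<in>I. (\<bar>b \<bullet> u\<bar> * \<sigma>)\<^sup>2)))"
    using s by (intro sum_indep_normal fI I0 ind each) (auto simp: I_def)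
  have sq: "(\<Sum>b\<in>I. (\<bar>b \<bullet> u\<bar> * \<sigma>)\<^sup>2) = (\<sigma> * norm u)\<^sup>2"
  proof -
    have "(\<Sum>b\<in>I. (\<bar>b \<bullet> u\<bar> * \<sigma>)\<^sup>2) = (\<Sum>b\<in>Basis. (b \<bullet> u)\<^sup>2 * \<sigma>\<^sup>2)"
      by (rule sum.mono_neutral_cong_left) (auto simp: I_def power_mult_distrib)
    also have "\<dots> = \<sigma>\<^sup>2 * (u \<bullet> u)"
      by (subst euclidean_inner[of u u]) (simp add: sum_distrib_left power2_eq_square inner_commute mult.commute)
    finally show ?thesis by (simp add: power_mult_distrib power2_norm_eq_inner)
  qed
  have eqf: "(\<Sum>b\<in>Basis. \<omega> b *\<^sub>R b) \<bullet> u = (\<Sum>b\<in>I. (b \<bullet> u) * \<omega> b)" for \<omega> :: "'a \<Rightarrow> real"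
  proof -
    have "(\<Sum>b\<in>Basis. \<omega> b *\<^sub>R b) \<bullet> u = (\<Sum>b\<in>Basis. (b \<bullet> u) * \<omega> b)"
      by (simp add: inner_sum_left mult.commute)
    also have "\<dots> = (\<Sum>b\<in>I. (b \<bullet> u) * \<omega> b)"
      by (rule sum.mono_neutral_right) (auto simp: I_def)
    finally show ?thesis .
  qed
  show ?thesis using sum s by (simp add: eqf sq)
qed

lemma gauss_proj:
  assumes s: "\<sigma> > 0" and u: "u \<noteq> (0::'a::euclidean_space)"
  shows "distributed (gauss \<sigma> :: 'a measure) lborel (\<lambda>\<epsilon>. \<epsilon> \<bullet> u) (\<lambda>x. ennreal (normal_density 0 (\<sigma> * norm u) x))"
proof -
  have d: "distributed (PiM (Basis::'a set) (\<lambda>_. Nd \<sigma>)) lborel (\<lambda>\<omega>. (\<Sum>b\<in>Basis. \<omega> b *\<^sub>R b) \<bullet> u)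
           (\<lambda>x. ennreal (normal_density 0 (\<sigma> * norm u) x))" by (rule PiM_proj_normal[OF s u])
  show ?thesis
    using d unfolding distributed_def gauss_eq_PiM[OF s]
    by (auto simp: distr_distr comp_def)
qed


lemma real_distribution_std: "real_distribution (density lborel std_normal_density)"
proof -
  interpret prob_space "density lborel std_normal_density" by (rule prob_space_normal_density) simp
  show ?thesis by unfold_locales simp
qed

interpretation Std: real_distribution "density lborel std_normal_density"
  by (rule real_distribution_std)

lemma Phi_cdf: "Phi = cdf (density lborel std_normal_density)" by (simp add: Phi_def)

lemma Phi_mono: "x \<le> y \<Longrightarrow> Phi x \<le> Phi y"
  unfolding Phi_cdf by (rule Std.cdf_nondecreasing)

lemma Phi_strict: assumes "x < y" shows "Phi x < Phi y"
proof -
  have "Phi y - Phi x = measure (density lborel std_normal_density) {x<..y}"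
    unfolding Phi_cdf using assms by (rule Std.cdf_diff_eq)
  moreover have "emeasure (density lborel std_normal_density) {x<..y} \<noteq> 0"
  proof
    assume "emeasure (density lborel std_normal_density) {x<..y} = 0"
    then have "(\<integral>\<^sup>+z. ennreal (std_normal_density z) * indicator {x<..y} z \<partial>lborel) = 0"
      by (simp add: emeasure_density)
    then have "emeasure lborel {z \<in> space lborel. ennreal (std_normal_density z) * indicator {x<..y} z \<noteq> 0} = 0"
      by (subst (asm) nn_integral_0_iff) auto
    moreover have "{z \<in> space lborel. ennreal (std_normal_density z) * indicator {x<..y} z \<noteq> 0} = {x<..y}"
    proof -
      have pos0: "\<And>z. std_normal_density z \<noteq> 0" using normal_density_pos[of 1 0] by (metis less_irrefl zero_less_one)
      show ?thesis using pos0 by (auto simp: indicator_def)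
    qed
    ultimately show False using assms by simp
  qed
  ultimately show ?thesis
    by (metis Std.emeasure_eq_measure diff_gt_0_iff_gt ennreal_0 less_eq_real_def measure_nonneg)
qed

lemma Phi_cont: "isCont Phi x"
proof -
  have "{x} \<in> null_sets (density lborel std_normal_density)"
  proof (rule iffD2[OF null_sets_density_iff], simp, rule conjI)
    show "AE y in lborel. y \<in> {x} \<longrightarrow> ennreal (std_normal_density y) = 0"
      using AE_lborel_singleton[of x] by eventually_elim auto
  qed simp
  then have "emeasure (density lborel std_normal_density) {x} = 0" by auto
  then show ?thesis unfolding Phi_cdf by (subst Std.isCont_cdf) (simp add: Std.emeasure_eq_measure)
qed

lemma Phi_at_bot: "(Phi \<longlongrightarrow> 0) at_bot" unfolding Phi_cdf by (rule Std.cdf_lim_at_bot)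
lemma Phi_at_top: "(Phi \<longlongrightarrow> 1) at_top" unfolding Phi_cdf by (rule Std.cdf_lim_at_top_prob)

lemma Phi_bounds: "0 < Phi x" "Phi x < 1"
proof -
  have "0 \<le> Phi (x - 1)" unfolding Phi_cdf by (rule Std.cdf_nonneg)
  also have "\<dots> < Phi x" by (rule Phi_strict) simp
  finally show "0 < Phi x" .
  have "Phi x < Phi (x + 1)" by (rule Phi_strict) simp
  also have "\<dots> \<le> 1" unfolding Phi_cdf by (rule Std.cdf_bounded_prob)
  finally show "Phi x < 1" .
qed

lemma Phi_surj: assumes "0 < p" "p < 1" shows "\<exists>x. Phi x = p"
proof -
  have "eventually (\<lambda>x. Phi x < p) at_bot" using order_tendstoD(2)[OF Phi_at_bot assms(1)] .
  then obtain a where "\<forall>n\<le>a. Phi n < p" unfolding eventually_at_bot_linorder by blast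
  then have a: "Phi a < p" by simp
  have "eventually (\<lambda>x. Phi x > p) at_top" using order_tendstoD(1)[OF Phi_at_top assms(2)] .
  then obtain b where "\<forall>n\<ge>b. Phi n > p" unfolding eventually_at_top_linorder by blast
  then have b: "Phi b > p" by simp
  have ab: "a \<le> b"
  proof (rule ccontr)
    assume "\<not> a \<le> b"
    then have "Phi b \<le> Phi a" by (intro Phi_mono) simp
    with a b show False by simp
  qed
  have "\<exists>x\<ge>a. x \<le> b \<and> Phi x = p"
    by (rule IVT) (use a b ab Phi_cont in auto)
  then show ?thesis by blast
qed

lemma Phi_inj: "Phi x = Phi y \<Longrightarrow> x = y"
  by (metis Phi_strict less_irrefl linorder_neqE)

lemma Phi_Phi_inv: "0 < p \<Longrightarrow> p < 1 \<Longrightarrow> Phi (Phi_inv p) = p"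
  unfolding Phi_inv_def using Phi_surj by (metis (mono_tags) Phi_inj theI)

lemma Phi_inv_Phi: "Phi_inv (Phi x) = x"
  using Phi_Phi_inv[OF Phi_bounds] Phi_inj by blast

lemma Phi_inv_mono: "0 < p \<Longrightarrow> p \<le> q \<Longrightarrow> q < 1 \<Longrightarrow> Phi_inv p \<le> Phi_inv q"
  by (metis Phi_Phi_inv Phi_strict not_le order.strict_trans1 order.strict_trans2)

lemma Phi_shift_mono_p: "p \<le> q \<Longrightarrow> Phi_shift p t \<le> Phi_shift q t"
  unfolding Phi_shift_def using Phi_bounds[of "Phi_inv p + t"] Phi_bounds[of "Phi_inv q + t"]
  by (auto intro!: Phi_mono Phi_inv_mono)

lemma Phi_shift_mono_t: "t \<le> t' \<Longrightarrow> Phi_shift p t \<le> Phi_shift p t'"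
  unfolding Phi_shift_def by (auto intro!: Phi_mono)

lemma Phi_shift_0: "0 \<le> p \<Longrightarrow> p \<le> 1 \<Longrightarrow> Phi_shift p 0 = p"
  unfolding Phi_shift_def by (auto simp: Phi_Phi_inv)

lemma Phi_shift_bounds: "0 \<le> Phi_shift p t" "Phi_shift p t \<le> 1"
  unfolding Phi_shift_def using Phi_bounds[of "Phi_inv p + t"] by auto


definition gd :: "real \<Rightarrow> 'a::euclidean_space \<Rightarrow> real" where
  "gd \<sigma> y = (2 * pi * \<sigma>\<^sup>2) powr (- real DIM('a) / 2) * exp (- (norm y)\<^sup>2 / (2 * \<sigma>\<^sup>2))"

lemma gd_pos: "\<sigma> > 0 \<Longrightarrow> gd \<sigma> y > 0"
  by (simp add: gd_def)

lemma gd_meas[measurable]: "gd \<sigma> \<in> borel_measurable borel"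
  unfolding gd_def by measurable

lemma gauss_gd: "gauss \<sigma> = density lborel (\<lambda>y. ennreal (gd \<sigma> y))"
  by (simp add: gauss_def gd_def)

lemma sets_gauss[measurable_cong, simp]: "sets (gauss \<sigma>) = sets borel"
  by (simp add: gauss_def)

lemma space_gauss[simp]: "space (gauss \<sigma>) = UNIV"
  by (simp add: gauss_def)

lemma prob_space_gauss: assumes "\<sigma> > 0" shows "prob_space (gauss \<sigma> :: 'a::euclidean_space measure)"
  unfolding gauss_eq_PiM[OF assms]
  by (intro prob_space.prob_space_distr prob_space_PiM) (auto simp: prob_space_Nd[OF assms])

lemma gauss_halfspace:
  assumes s: "\<sigma> > 0" and u: "u \<noteq> (0::'a::euclidean_space)"
  shows "measure (gauss \<sigma>) {\<epsilon>. \<epsilon> \<bullet> u \<le> c} = Phi (c / (\<sigma> * norm u))"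
proof -
  interpret prob_space "gauss \<sigma> :: 'a measure" by (rule prob_space_gauss[OF s])
  have tau: "\<sigma> * norm u > 0" using s u by simp
  have d: "distributed (gauss \<sigma>) lborel (\<lambda>\<epsilon>. \<epsilon> \<bullet> u) (\<lambda>x. ennreal (normal_density 0 (\<sigma> * norm u) x))"
    by (rule gauss_proj[OF s u])
  have d2: "distributed (gauss \<sigma>) lborel (\<lambda>\<epsilon>. (\<epsilon> \<bullet> u - 0) / (\<sigma> * norm u)) (\<lambda>x. ennreal (std_normal_density x))"
    using normal_standard_normal_convert[OF tau] d by simp
  then have eq: "distr (gauss \<sigma>) lborel (\<lambda>\<epsilon>. (\<epsilon> \<bullet> u - 0) / (\<sigma> * norm u)) = density lborel std_normal_density"
    and meas: "(\<lambda>\<epsilon>. (\<epsilon> \<bullet> u - 0) / (\<sigma> * norm u)) \<in> measurable (gauss \<sigma>) lborel"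
    unfolding distributed_def by auto
  have "{\<epsilon>. \<epsilon> \<bullet> u \<le> c} = (\<lambda>\<epsilon>. (\<epsilon> \<bullet> u - 0) / (\<sigma> * norm u)) -` {..c / (\<sigma> * norm u)} \<inter> space (gauss \<sigma>)"
    using tau by (auto simp: divide_le_cancel)
  then have "measure (gauss \<sigma>) {\<epsilon>. \<epsilon> \<bullet> u \<le> c}
      = measure (distr (gauss \<sigma>) lborel (\<lambda>\<epsilon>. (\<epsilon> \<bullet> u - 0) / (\<sigma> * norm u))) {..c / (\<sigma> * norm u)}"
    using meas by (simp add: measure_distr)
  also have "\<dots> = Phi (c / (\<sigma> * norm u))" by (subst eq) (simp add: Phi_def cdf_def)
  finally show ?thesis .
qed

lemma gauss_shift_integral:
  fixes g :: "'a::euclidean_space \<Rightarrow> real"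
  assumes s: "\<sigma> > 0" and g[measurable]: "g \<in> borel_measurable borel"
  shows "(\<integral>\<epsilon>. g (x + \<epsilon>) \<partial>gauss \<sigma>) = (\<integral>z. gd \<sigma> (z - x) * g z \<partial>lborel)"
proof -
  have "(\<integral>\<epsilon>. g (x + \<epsilon>) \<partial>gauss \<sigma>) = (\<integral>\<epsilon>. gd \<sigma> \<epsilon> * g (x + \<epsilon>) \<partial>lborel)"
    unfolding gauss_gd using s by (subst integral_density) (auto simp: less_imp_le[OF gd_pos])
  also have "\<dots> = (\<integral>\<epsilon>. (\<lambda>z. gd \<sigma> (z - x) * g z) (x + \<epsilon>) \<partial>lborel)" by simp
  also have "\<dots> = (\<integral>z. gd \<sigma> (z - x) * g z \<partial>distr lborel borel ((+) x))"
    by (subst integral_distr) auto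
  also have "\<dots> = (\<integral>z. gd \<sigma> (z - x) * g z \<partial>lborel)" by (simp add: lborel_distr_plus)
  finally show ?thesis .
qed

lemma gd_integrable:
  fixes x :: "'a::euclidean_space"
  assumes s: "\<sigma> > 0"
  shows "integrable lborel (\<lambda>z. gd \<sigma> (z - x))"
proof -
  interpret prob_space "gauss \<sigma> :: 'a measure" by (rule prob_space_gauss[OF s])
  have "integrable (gauss \<sigma> :: 'a measure) (\<lambda>_. 1::real)" by simp
  then have "integrable lborel (\<lambda>\<epsilon>::'a. gd \<sigma> \<epsilon> *\<^sub>R (1::real))"
    unfolding gauss_gd using s by (subst (asm) integrable_density) (auto simp: less_imp_le[OF gd_pos])
  then have "integrable lborel (\<lambda>\<epsilon>. (\<lambda>z. gd \<sigma> (z - x)) (x + \<epsilon>))" by simp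
  then have "integrable (distr lborel borel ((+) x)) (\<lambda>z. gd \<sigma> (z - x))"
    by (subst integrable_distr_eq) auto
  then show ?thesis by (simp add: lborel_distr_plus)
qed

lemma gd_ratio:
  fixes y d :: "'a::euclidean_space"
  shows "gd \<sigma> (y - d) = gd \<sigma> y * exp ((2 * (y \<bullet> d) - (norm d)\<^sup>2) / (2 * \<sigma>\<^sup>2))"
proof -
  have "(norm (y - d))\<^sup>2 = (norm y)\<^sup>2 - 2 * (y \<bullet> d) + (norm d)\<^sup>2"
    by (simp add: power2_norm_eq_inner inner_diff_left inner_diff_right inner_commute)
  then have "- (norm (y - d))\<^sup>2 = - (norm y)\<^sup>2 + (2 * (y \<bullet> d) - (norm d)\<^sup>2)" by simp
  then have "- (norm (y - d))\<^sup>2 / (2 * \<sigma>\<^sup>2) = (- (norm y)\<^sup>2 + (2 * (y \<bullet> d) - (norm d)\<^sup>2)) / (2 * \<sigma>\<^sup>2)" by simp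
  also have "\<dots> = - (norm y)\<^sup>2 / (2 * \<sigma>\<^sup>2) + (2 * (y \<bullet> d) - (norm d)\<^sup>2) / (2 * \<sigma>\<^sup>2)" by (rule add_divide_distrib)
  finally have e2: "- (norm (y - d))\<^sup>2 / (2 * \<sigma>\<^sup>2) = - (norm y)\<^sup>2 / (2 * \<sigma>\<^sup>2) + (2 * (y \<bullet> d) - (norm d)\<^sup>2) / (2 * \<sigma>\<^sup>2)" .
  show ?thesis unfolding gd_def e2 exp_add by (simp only: mult.assoc)
qed


lemma integrable_bdd_mult:
  fixes \<rho> h :: "'a::euclidean_space \<Rightarrow> real"
  assumes "integrable lborel \<rho>" "h \<in> borel_measurable borel" "\<And>z. \<bar>h z\<bar> \<le> 1"
  shows "integrable lborel (\<lambda>z. \<rho> z * h z)"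
proof (rule Bochner_Integration.integrable_bound[OF assms(1)])
  show "(\<lambda>z. \<rho> z * h z) \<in> borel_measurable lborel"
    using assms(1,2) by (auto dest: borel_measurable_integrable)
  show "AE z in lborel. norm (\<rho> z * h z) \<le> norm (\<rho> z)"
    using assms(3) by (auto simp: abs_mult intro!: mult_left_le)
qed

lemma cmp_lower:
  fixes h \<rho>X \<rho>Y :: "'a::euclidean_space \<Rightarrow> real"
  assumes iX: "integrable lborel \<rho>X" and iY: "integrable lborel \<rho>Y"
    and hm: "h \<in> borel_measurable borel" and h01: "\<And>z. 0 \<le> h z \<and> h z \<le> 1"
    and A: "A \<in> sets borel" and ww: "0 \<le> ww"
    and inA: "\<And>z. z \<in> A \<Longrightarrow> \<rho>Y z \<le> ww * \<rho>X z"
    and outA: "\<And>z. z \<notin> A \<Longrightarrow> ww * \<rho>X z \<le> \<rho>Y z"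
    and X: "(\<integral>z. \<rho>X z * indicator A z \<partial>lborel) \<le> (\<integral>z. \<rho>X z * h z \<partial>lborel)"
  shows "(\<integral>z. \<rho>Y z * indicator A z \<partial>lborel) \<le> (\<integral>z. \<rho>Y z * h z \<partial>lborel)"
proof -
  have hb: "\<And>z. \<bar>h z\<bar> \<le> 1" using h01 by (simp add: abs_le_iff)
  have ib: "\<And>z. \<bar>indicator A z :: real\<bar> \<le> 1" by (simp add: indicator_def)
  have Am: "indicator A \<in> borel_measurable (borel :: 'a measure)" using A by measurable
  note i1 = integrable_bdd_mult[OF iY hm hb]
  note i2 = integrable_bdd_mult[OF iY Am ib]
  note i3 = integrable_bdd_mult[OF iX hm hb]
  note i4 = integrable_bdd_mult[OF iX Am ib]
  have pw: "0 \<le> (\<rho>Y z * h z - \<rho>Y z * indicator A z) - ww * (\<rho>X z * h z - \<rho>X z * indicator A z)" for z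
  proof (cases "z \<in> A")
    case True
    have "0 \<le> (1 - h z) * (ww * \<rho>X z - \<rho>Y z)" using h01[of z] inA[OF True] by simp
    then show ?thesis using True by (simp add: algebra_simps)
  next
    case False
    have "0 \<le> h z * (\<rho>Y z - ww * \<rho>X z)" using h01[of z] outA[OF False] by simp
    then show ?thesis using False by (simp add: algebra_simps)
  qed
  have "0 \<le> (\<integral>z. (\<rho>Y z * h z - \<rho>Y z * indicator A z) - ww * (\<rho>X z * h z - \<rho>X z * indicator A z) \<partial>lborel)"
    using pw by (intro integral_nonneg_AE) auto
  also have "\<dots> = ((\<integral>z. \<rho>Y z * h z \<partial>lborel) - (\<integral>z. \<rho>Y z * indicator A z \<partial>lborel))
      - ww * ((\<integral>z. \<rho>X z * h z \<partial>lborel) - (\<integral>z. \<rho>X z * indicator A z \<partial>lborel))"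
    using i1 i2 i3 i4 by (simp add: Bochner_Integration.integral_diff)
  finally have "ww * ((\<integral>z. \<rho>X z * h z \<partial>lborel) - (\<integral>z. \<rho>X z * indicator A z \<partial>lborel))
      \<le> (\<integral>z. \<rho>Y z * h z \<partial>lborel) - (\<integral>z. \<rho>Y z * indicator A z \<partial>lborel)" by simp
  moreover have "0 \<le> ww * ((\<integral>z. \<rho>X z * h z \<partial>lborel) - (\<integral>z. \<rho>X z * indicator A z \<partial>lborel))"
    using ww X by simp
  ultimately show ?thesis by simp
qed

lemma cmp_upper:
  fixes h \<rho>X \<rho>Y :: "'a::euclidean_space \<Rightarrow> real"
  assumes iX: "integrable lborel \<rho>X" and iY: "integrable lborel \<rho>Y"
    and hm: "h \<in> borel_measurable borel" and h01: "\<And>z. 0 \<le> h z \<and> h z \<le> 1"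
    and A: "A \<in> sets borel" and ww: "0 \<le> ww"
    and inA: "\<And>z. z \<in> A \<Longrightarrow> ww * \<rho>X z \<le> \<rho>Y z"
    and outA: "\<And>z. z \<notin> A \<Longrightarrow> \<rho>Y z \<le> ww * \<rho>X z"
    and X: "(\<integral>z. \<rho>X z * h z \<partial>lborel) \<le> (\<integral>z. \<rho>X z * indicator A z \<partial>lborel)"
  shows "(\<integral>z. \<rho>Y z * h z \<partial>lborel) \<le> (\<integral>z. \<rho>Y z * indicator A z \<partial>lborel)"
proof -
  have hb: "\<And>z. \<bar>h z\<bar> \<le> 1" using h01 by (simp add: abs_le_iff)
  have ib: "\<And>z. \<bar>indicator A z :: real\<bar> \<le> 1" by (simp add: indicator_def)
  have Am: "indicator A \<in> borel_measurable (borel :: 'a measure)" using A by measurable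
  note i1 = integrable_bdd_mult[OF iY hm hb]
  note i2 = integrable_bdd_mult[OF iY Am ib]
  note i3 = integrable_bdd_mult[OF iX hm hb]
  note i4 = integrable_bdd_mult[OF iX Am ib]
  have pw: "0 \<le> (\<rho>Y z * indicator A z - \<rho>Y z * h z) - ww * (\<rho>X z * indicator A z - \<rho>X z * h z)" for z
  proof (cases "z \<in> A")
    case True
    have "0 \<le> (1 - h z) * (\<rho>Y z - ww * \<rho>X z)" using h01[of z] inA[OF True] by simp
    then show ?thesis using True by (simp add: algebra_simps)
  next
    case False
    have "0 \<le> h z * (ww * \<rho>X z - \<rho>Y z)" using h01[of z] outA[OF False] by simp
    then show ?thesis using False by (simp add: algebra_simps)
  qed
  have "0 \<le> (\<integral>z. (\<rho>Y z * indicator A z - \<rho>Y z * h z) - ww * (\<rho>X z * indicator A z - \<rho>X z * h z) \<partial>lborel)"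
    using pw by (intro integral_nonneg_AE) auto
  also have "\<dots> = ((\<integral>z. \<rho>Y z * indicator A z \<partial>lborel) - (\<integral>z. \<rho>Y z * h z \<partial>lborel))
      - ww * ((\<integral>z. \<rho>X z * indicator A z \<partial>lborel) - (\<integral>z. \<rho>X z * h z \<partial>lborel))"
    using i1 i2 i3 i4 by (simp add: Bochner_Integration.integral_diff)
  finally have "ww * ((\<integral>z. \<rho>X z * indicator A z \<partial>lborel) - (\<integral>z. \<rho>X z * h z \<partial>lborel))
      \<le> (\<integral>z. \<rho>Y z * indicator A z \<partial>lborel) - (\<integral>z. \<rho>Y z * h z \<partial>lborel)" by simp
  moreover have "0 \<le> ww * ((\<integral>z. \<rho>X z * indicator A z \<partial>lborel) - (\<integral>z. \<rho>X z * h z \<partial>lborel))"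
    using ww X by simp
  ultimately show ?thesis by simp
qed


lemma halfspace_int:
  fixes x y v :: "'a::euclidean_space"
  assumes s: "\<sigma> > 0" and v: "v \<noteq> 0"
  shows "(\<integral>z. gd \<sigma> (z - y) * indicator {z. (z - x) \<bullet> v \<le> c} z \<partial>lborel) = Phi ((c - (y - x) \<bullet> v) / (\<sigma> * norm v))"
proof -
  have "(\<integral>z. gd \<sigma> (z - y) * indicator {z. (z - x) \<bullet> v \<le> c} z \<partial>lborel)
      = (\<integral>\<epsilon>. indicator {z. (z - x) \<bullet> v \<le> c} (y + \<epsilon>) \<partial>gauss \<sigma>)"
    by (rule gauss_shift_integral[OF s, symmetric]) measurable
  also have "\<dots> = (\<integral>\<epsilon>. indicator {\<epsilon>. \<epsilon> \<bullet> v \<le> c - (y - x) \<bullet> v} \<epsilon> \<partial>gauss \<sigma>)"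
    by (intro Bochner_Integration.integral_cong refl) (auto simp: indicator_def inner_diff_left inner_add_left)
  also have "\<dots> = measure (gauss \<sigma>) {\<epsilon>. \<epsilon> \<bullet> v \<le> c - (y - x) \<bullet> v}" by simp
  also have "\<dots> = Phi ((c - (y - x) \<bullet> v) / (\<sigma> * norm v))" by (rule gauss_halfspace[OF s v])
  finally show ?thesis .
qed

lemma gd_total:
  fixes y :: "'a::euclidean_space"
  assumes s: "\<sigma> > 0"
  shows "(\<integral>z. gd \<sigma> (z - y) \<partial>lborel) = 1"
proof -
  interpret prob_space "gauss \<sigma> :: 'a measure" by (rule prob_space_gauss[OF s])
  have "(\<integral>z. gd \<sigma> (z - y) * (\<lambda>_. 1) z \<partial>lborel) = (\<integral>\<epsilon>. (\<lambda>_. 1::real) (y + \<epsilon>) \<partial>(gauss \<sigma> :: 'a measure))"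
    by (rule gauss_shift_integral[OF s, symmetric]) measurable
  also have "\<dots> = 1" using prob_space by simp
  finally show ?thesis by simp
qed

lemma zero_transfer:
  fixes g :: "'a::euclidean_space \<Rightarrow> real" and x y :: 'a
  assumes s: "\<sigma> > 0" and gm: "g \<in> borel_measurable borel" and g01: "\<And>z. 0 \<le> g z \<and> g z \<le> 1"
    and z: "(\<integral>z. gd \<sigma> (z - x) * g z \<partial>lborel) = 0"
  shows "(\<integral>z. gd \<sigma> (z - y) * g z \<partial>lborel) = 0"
proof -
  have gb: "\<And>z. \<bar>g z\<bar> \<le> 1" using g01 by (simp add: abs_le_iff)
  have "integrable lborel (\<lambda>z. gd \<sigma> (z - x) * g z)"
    by (rule integrable_bdd_mult[OF gd_integrable[OF s] gm gb])
  then have "AE z in lborel. gd \<sigma> (z - x) * g z = 0"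
  proof (subst integral_nonneg_eq_0_iff_AE[symmetric])
    have "0 \<le> gd \<sigma> (z - x) * g z" for z using g01[of z] gd_pos[OF s, of "z - x"] by simp
    then show "AE z in lborel. 0 \<le> gd \<sigma> (z - x) * g z" by simp
  qed (use z in auto)
  then have "AE z in lborel. gd \<sigma> (z - y) * g z = 0"
    by eventually_elim (metis gd_pos[OF s] less_irrefl mult_eq_0_iff)
  then show ?thesis by (rule integral_eq_zero_AE)
qed

lemma int_bounds:
  fixes h :: "'a::euclidean_space \<Rightarrow> real" and y :: 'a
  assumes s: "\<sigma> > 0" and hm: "h \<in> borel_measurable borel" and h01: "\<And>z. 0 \<le> h z \<and> h z \<le> 1"
  shows "0 \<le> (\<integral>z. gd \<sigma> (z - y) * h z \<partial>lborel)" "(\<integral>z. gd \<sigma> (z - y) * h z \<partial>lborel) \<le> 1"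
proof -
  show "0 \<le> (\<integral>z. gd \<sigma> (z - y) * h z \<partial>lborel)"
  proof (intro integral_nonneg_AE AE_I2)
    show "0 \<le> gd \<sigma> (z - y) * h z" for z using h01[of z] gd_pos[OF s, of "z - y"] by simp
  qed
  have hb: "\<And>z. \<bar>h z\<bar> \<le> 1" using h01 by (simp add: abs_le_iff)
  have "(\<integral>z. gd \<sigma> (z - y) * h z \<partial>lborel) \<le> (\<integral>z. gd \<sigma> (z - y) \<partial>lborel)"
  proof (intro integral_mono integrable_bdd_mult[OF gd_integrable[OF s] hm hb] gd_integrable[OF s])
    show "gd \<sigma> (z - y) * h z \<le> gd \<sigma> (z - y)" for z
      using h01[of z] gd_pos[OF s, of "z - y"] by (simp add: mult_left_le)
  qed
  then show "(\<integral>z. gd \<sigma> (z - y) * h z \<partial>lborel) \<le> 1" using gd_total[OF s, of y] by linarith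
qed

lemma one_transfer:
  fixes h :: "'a::euclidean_space \<Rightarrow> real" and x y :: 'a
  assumes s: "\<sigma> > 0" and hm: "h \<in> borel_measurable borel" and h01: "\<And>z. 0 \<le> h z \<and> h z \<le> 1"
    and o: "(\<integral>z. gd \<sigma> (z - x) * h z \<partial>lborel) \<ge> 1"
  shows "(\<integral>z. gd \<sigma> (z - y) * h z \<partial>lborel) = 1"
proof -
  have hb: "\<And>z. \<bar>h z\<bar> \<le> 1" using h01 by (simp add: abs_le_iff)
  have split: "(\<integral>z. gd \<sigma> (z - w) * (1 - h z) \<partial>lborel) = 1 - (\<integral>z. gd \<sigma> (z - w) * h z \<partial>lborel)" for w
  proof -
    have "(\<integral>z. gd \<sigma> (z - w) * (1 - h z) \<partial>lborel) = (\<integral>z. gd \<sigma> (z - w) - gd \<sigma> (z - w) * h z \<partial>lborel)"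
      by (simp add: algebra_simps)
    also have "\<dots> = (\<integral>z. gd \<sigma> (z - w) \<partial>lborel) - (\<integral>z. gd \<sigma> (z - w) * h z \<partial>lborel)"
      by (rule Bochner_Integration.integral_diff[OF gd_integrable[OF s] integrable_bdd_mult[OF gd_integrable[OF s] hm hb]])
    finally show ?thesis using gd_total[OF s] by simp
  qed
  have "(\<integral>z. gd \<sigma> (z - x) * (1 - h z) \<partial>lborel) = 0"
    using split[of x] o int_bounds(2)[OF s hm h01, of x] by simp
  then have "(\<integral>z. gd \<sigma> (z - y) * (1 - h z) \<partial>lborel) = 0"
  proof -
    have m: "(\<lambda>z. 1 - h z) \<in> borel_measurable borel" using hm by measurable
    show ?thesis by (rule zero_transfer[OF s m _ \<open>(\<integral>z. gd \<sigma> (z - x) * (1 - h z) \<partial>lborel) = 0\<close>]) (use h01 in auto)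
  qed
  then show ?thesis using split[of y] by simp
qed


lemma NP_lborel:
  fixes h :: "'a::euclidean_space \<Rightarrow> real" and x \<delta> :: 'a
  assumes s: "\<sigma> > 0" and hm: "h \<in> borel_measurable borel" and h01: "\<And>z. 0 \<le> h z \<and> h z \<le> 1"
  defines "p \<equiv> (\<integral>z. gd \<sigma> (z - x) * h z \<partial>lborel)" and "q \<equiv> (\<integral>z. gd \<sigma> (z - (x + \<delta>)) * h z \<partial>lborel)"
  shows "Phi_shift p (- norm \<delta> / \<sigma>) \<le> q \<and> q \<le> Phi_shift p (norm \<delta> / \<sigma>)"
proof -
  have p01: "0 \<le> p" "p \<le> 1" unfolding p_def using int_bounds[OF s hm h01] by auto
  have q01: "0 \<le> q" "q \<le> 1" unfolding q_def using int_bounds[OF s hm h01] by auto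
  show ?thesis
  proof (cases "\<delta> = 0")
    case True
    then have "q = p" by (simp add: p_def q_def)
    then show ?thesis using True p01 by (simp add: Phi_shift_0)
  next
    case dnz: False
    define r where "r = norm \<delta>"
    have r: "r > 0" using dnz by (simp add: r_def)
    have iX: "integrable lborel (\<lambda>z. gd \<sigma> (z - x))" by (rule gd_integrable[OF s])
    have iY: "integrable lborel (\<lambda>z. gd \<sigma> (z - (x + \<delta>)))" by (rule gd_integrable[OF s])
    have ratio: "gd \<sigma> (z - (x + \<delta>)) = gd \<sigma> (z - x) * exp ((2 * ((z - x) \<bullet> \<delta>) - r\<^sup>2) / (2 * \<sigma>\<^sup>2))" for z
      using gd_ratio[of \<sigma> "z - x" \<delta>] by (simp add: r_def diff_diff_eq)
    have gdnn: "0 \<le> gd \<sigma> y" for y :: 'a using gd_pos[OF s, of y] by simp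
    have lower: "Phi_shift p (- r / \<sigma>) \<le> q"
    proof -
      consider "p \<le> 0" | "p \<ge> 1" | "0 < p" "p < 1" by linarith
      then show ?thesis
      proof cases
        case 1 then show ?thesis using q01 by (simp add: Phi_shift_def)
      next
        case 2
        have "q = 1" unfolding q_def by (rule one_transfer[OF s hm h01]) (use 2 p_def in simp)
        then show ?thesis using Phi_shift_bounds(2) by simp
      next
        case 3
        define t where "t = Phi_inv p"
        define c where "c = \<sigma> * r * t"
        define A where "A = {z. (z - x) \<bullet> \<delta> \<le> c}"
        define w0 where "w0 = exp ((2 * c - r\<^sup>2) / (2 * \<sigma>\<^sup>2))"
        have PX: "(\<integral>z. gd \<sigma> (z - x) * indicator A z \<partial>lborel) = p"
          unfolding A_def using halfspace_int[OF s dnz, of x x c] s r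
          by (simp add: c_def t_def r_def Phi_Phi_inv 3)
        have PY: "(\<integral>z. gd \<sigma> (z - (x + \<delta>)) * indicator A z \<partial>lborel) = Phi (t - r / \<sigma>)"
        proof -
          have "(c - (x + \<delta> - x) \<bullet> \<delta>) / (\<sigma> * norm \<delta>) = t - r / \<sigma>"
            using s r by (simp add: c_def r_def field_simps power2_norm_eq_inner[symmetric] power2_eq_square)
          then show ?thesis unfolding A_def using halfspace_int[OF s dnz, of "x + \<delta>" x c] by simp
        qed
        have "(\<integral>z. gd \<sigma> (z - (x + \<delta>)) * indicator A z \<partial>lborel) \<le> (\<integral>z. gd \<sigma> (z - (x + \<delta>)) * h z \<partial>lborel)"
        proof (rule cmp_lower[OF iX iY hm h01, where ww=w0])
          show "A \<in> sets borel" unfolding A_def by measurable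
          show "0 \<le> w0" by (simp add: w0_def)
          show "gd \<sigma> (z - (x + \<delta>)) \<le> w0 * gd \<sigma> (z - x)" if "z \<in> A" for z
          proof -
            have "(2 * ((z - x) \<bullet> \<delta>) - r\<^sup>2) / (2 * \<sigma>\<^sup>2) \<le> (2 * c - r\<^sup>2) / (2 * \<sigma>\<^sup>2)"
              using that s by (intro divide_right_mono) (auto simp: A_def)
            then show ?thesis unfolding ratio w0_def using gdnn[of "z - x"]
              by (simp add: mult.commute mult_left_mono)
          qed
          show "w0 * gd \<sigma> (z - x) \<le> gd \<sigma> (z - (x + \<delta>))" if "z \<notin> A" for z
          proof -
            have "(2 * c - r\<^sup>2) / (2 * \<sigma>\<^sup>2) \<le> (2 * ((z - x) \<bullet> \<delta>) - r\<^sup>2) / (2 * \<sigma>\<^sup>2)"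
              using that s by (intro divide_right_mono) (auto simp: A_def)
            then show ?thesis unfolding ratio w0_def using gdnn[of "z - x"]
              by (simp add: mult.commute mult_left_mono)
          qed
          show "(\<integral>z. gd \<sigma> (z - x) * indicator A z \<partial>lborel) \<le> (\<integral>z. gd \<sigma> (z - x) * h z \<partial>lborel)"
            using PX by (simp add: p_def)
        qed
        then have "Phi (t - r / \<sigma>) \<le> q" using PY by (simp add: q_def)
        then show ?thesis using 3 by (simp add: Phi_shift_def t_def)
      qed
    qed
    have upper: "q \<le> Phi_shift p (r / \<sigma>)"
    proof -
      consider "p \<le> 0" | "p \<ge> 1" | "0 < p" "p < 1" by linarith
      then show ?thesis
      proof cases
        case 1
        have "q = 0" unfolding q_def by (rule zero_transfer[OF s hm h01]) (use 1 p01 p_def in simp)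
        then show ?thesis using Phi_shift_bounds(1) by simp
      next
        case 2 then show ?thesis using q01 by (simp add: Phi_shift_def)
      next
        case 3
        define t where "t = Phi_inv p"
        define c where "c = \<sigma> * r * t"
        define A where "A = {z. (z - x) \<bullet> (- \<delta>) \<le> c}"
        define w0 where "w0 = exp ((- 2 * c - r\<^sup>2) / (2 * \<sigma>\<^sup>2))"
        have mdnz: "- \<delta> \<noteq> 0" using dnz by simp
        have PX: "(\<integral>z. gd \<sigma> (z - x) * indicator A z \<partial>lborel) = p"
          unfolding A_def using halfspace_int[OF s mdnz, of x x c] s r
          by (simp add: c_def t_def r_def Phi_Phi_inv 3)
        have PY: "(\<integral>z. gd \<sigma> (z - (x + \<delta>)) * indicator A z \<partial>lborel) = Phi (t + r / \<sigma>)"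
        proof -
          have "(c - (x + \<delta> - x) \<bullet> (- \<delta>)) / (\<sigma> * norm (- \<delta>)) = t + r / \<sigma>"
            using s r by (simp add: c_def r_def field_simps power2_norm_eq_inner[symmetric] power2_eq_square)
          then show ?thesis unfolding A_def using halfspace_int[OF s mdnz, of "x + \<delta>" x c] by simp
        qed
        have "(\<integral>z. gd \<sigma> (z - (x + \<delta>)) * h z \<partial>lborel) \<le> (\<integral>z. gd \<sigma> (z - (x + \<delta>)) * indicator A z \<partial>lborel)"
        proof (rule cmp_upper[OF iX iY hm h01, where ww=w0])
          show "A \<in> sets borel" unfolding A_def by measurable
          show "0 \<le> w0" by (simp add: w0_def)
          show "w0 * gd \<sigma> (z - x) \<le> gd \<sigma> (z - (x + \<delta>))" if "z \<in> A" for z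
          proof -
            have "(- 2 * c - r\<^sup>2) / (2 * \<sigma>\<^sup>2) \<le> (2 * ((z - x) \<bullet> \<delta>) - r\<^sup>2) / (2 * \<sigma>\<^sup>2)"
              using that s by (intro divide_right_mono) (auto simp: A_def inner_minus_right)
            then show ?thesis unfolding ratio w0_def using gdnn[of "z - x"]
              by (simp add: mult.commute mult_left_mono)
          qed
          show "gd \<sigma> (z - (x + \<delta>)) \<le> w0 * gd \<sigma> (z - x)" if "z \<notin> A" for z
          proof -
            have "(2 * ((z - x) \<bullet> \<delta>) - r\<^sup>2) / (2 * \<sigma>\<^sup>2) \<le> (- 2 * c - r\<^sup>2) / (2 * \<sigma>\<^sup>2)"
              using that s by (intro divide_right_mono) (auto simp: A_def inner_minus_right)
            then show ?thesis unfolding ratio w0_def using gdnn[of "z - x"]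
              by (simp add: mult.commute mult_left_mono)
          qed
          show "(\<integral>z. gd \<sigma> (z - x) * h z \<partial>lborel) \<le> (\<integral>z. gd \<sigma> (z - x) * indicator A z \<partial>lborel)"
            using PX by (simp add: p_def)
        qed
        then have "q \<le> Phi (t + r / \<sigma>)" using PY by (simp add: q_def)
        then show ?thesis using 3 by (simp add: Phi_shift_def t_def)
      qed
    qed
    show ?thesis using lower upper by (simp add: r_def)
  qed
qed


lemma NP_gauss:
  fixes h :: "'a::euclidean_space \<Rightarrow> real" and x \<delta> :: 'a
  assumes s: "\<sigma> > 0" and hm: "h \<in> borel_measurable borel" and h01: "\<And>z. 0 \<le> h z \<and> h z \<le> 1"
  shows "Phi_shift (\<integral>\<epsilon>. h (x + \<epsilon>) \<partial>gauss \<sigma>) (- norm \<delta> / \<sigma>) \<le> (\<integral>\<epsilon>. h (x + \<delta> + \<epsilon>) \<partial>gauss \<sigma>)"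
    and "(\<integral>\<epsilon>. h (x + \<delta> + \<epsilon>) \<partial>gauss \<sigma>) \<le> Phi_shift (\<integral>\<epsilon>. h (x + \<epsilon>) \<partial>gauss \<sigma>) (norm \<delta> / \<sigma>)"
  using NP_lborel[OF s hm h01, of x \<delta>]
  by (simp_all add: gauss_shift_integral[OF s hm])

lemma label_prob_int:
  fixes f :: "'a::euclidean_space \<Rightarrow> nat set"
  assumes fm: "\<forall>i. {w. i \<in> f w} \<in> sets borel"
  shows "label_prob f \<sigma> z i = (\<integral>\<epsilon>. indicator {w. i \<in> f w} (z + \<epsilon>) \<partial>gauss \<sigma>)"
proof -
  have "(\<integral>\<epsilon>. indicator {w. i \<in> f w} (z + \<epsilon>) \<partial>gauss \<sigma>) = (\<integral>\<epsilon>. indicator {\<epsilon>. i \<in> f (z + \<epsilon>)} \<epsilon> \<partial>(gauss \<sigma> :: 'a measure))"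
    by (intro Bochner_Integration.integral_cong) (auto simp: indicator_def)
  also have "\<dots> = measure (gauss \<sigma>) {\<epsilon>. i \<in> f (z + \<epsilon>)}" by simp
  finally show ?thesis by (simp add: label_prob_def)
qed

lemma ind_meas:
  fixes f :: "'a::euclidean_space \<Rightarrow> nat set"
  assumes fm: "\<forall>i. {w. i \<in> f w} \<in> sets borel"
  shows "(\<lambda>w. indicator {w. i \<in> f w} w :: real) \<in> borel_measurable borel"
  using fm by (intro borel_measurable_indicator) auto

lemma NP_single:
  fixes f :: "'a::euclidean_space \<Rightarrow> nat set"
  assumes s: "\<sigma> > 0" and fm: "\<forall>i. {w. i \<in> f w} \<in> sets borel"
  shows "Phi_shift (label_prob f \<sigma> x i) (- norm \<delta> / \<sigma>) \<le> label_prob f \<sigma> (x + \<delta>) i"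
    and "label_prob f \<sigma> (x + \<delta>) i \<le> Phi_shift (label_prob f \<sigma> x i) (norm \<delta> / \<sigma>)"
  unfolding label_prob_int[OF fm]
  using NP_gauss[OF s ind_meas[OF fm], of i x \<delta>] by (auto simp: indicator_def)

lemma sum_ind_bound:
  fixes f :: "'a \<Rightarrow> nat set"
  assumes fr: "\<forall>w. f w \<subseteq> {1..c} \<and> card (f w) = k'" and U: "finite U"
  shows "(\<Sum>i\<in>U. indicator {w. i \<in> f w} w :: real) \<le> real k'"
proof -
  have fin: "finite (f w)" using fr finite_subset[OF _ finite_atLeastAtMost] by blast
  have ck: "card (f w) = k'" using fr by blast
  have "(\<Sum>i\<in>U. indicator {w. i \<in> f w} w :: real) = (\<Sum>i\<in>U. of_bool (i \<in> f w))"
    by (simp add: indicator_def)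
  also have "\<dots> = real (card {i \<in> U. i \<in> f w})"
  proof -
    have e: "{i \<in> U. i \<in> f w} = U \<inter> {i. i \<in> f w}" by blast
    show ?thesis using U unfolding e by simp
  qed
  also have "card {i \<in> U. i \<in> f w} \<le> card (f w)"
    by (rule card_mono[OF fin]) blast
  finally show ?thesis using ck by simp
qed

lemma NP_multi:
  fixes f :: "'a::euclidean_space \<Rightarrow> nat set"
  assumes s: "\<sigma> > 0" and fm: "\<forall>i. {w. i \<in> f w} \<in> sets borel"
    and fr: "\<forall>w. f w \<subseteq> {1..c} \<and> card (f w) = k'" and k': "1 \<le> k'" and U: "finite U"
  shows "real k' * Phi_shift ((\<Sum>i\<in>U. label_prob f \<sigma> x i) / k') (- norm \<delta> / \<sigma>) \<le> (\<Sum>i\<in>U. label_prob f \<sigma> (x + \<delta>) i)"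
    and "(\<Sum>i\<in>U. label_prob f \<sigma> (x + \<delta>) i) \<le> real k' * Phi_shift ((\<Sum>i\<in>U. label_prob f \<sigma> x i) / k') (norm \<delta> / \<sigma>)"
proof -
  interpret prob_space "gauss \<sigma> :: 'a measure" by (rule prob_space_gauss[OF s])
  define h where "h w = (\<Sum>i\<in>U. indicator {w. i \<in> f w} w) / real k'" for w
  have hm: "h \<in> borel_measurable borel" unfolding h_def using fm by measurable
  have h01: "0 \<le> h z \<and> h z \<le> 1" for z
    using sum_ind_bound[OF fr U, of z] k' unfolding h_def by (auto intro!: sum_nonneg divide_nonneg_nonneg)
  have hint: "(\<integral>\<epsilon>. h (z + \<epsilon>) \<partial>gauss \<sigma>) = (\<Sum>i\<in>U. label_prob f \<sigma> z i) / k'" for z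
  proof -
    have ii: "integrable (gauss \<sigma>) (\<lambda>\<epsilon>. indicator {w. i \<in> f w} (z + \<epsilon>) :: real)" for i
    proof -
      have "(\<lambda>\<epsilon>. indicator {w. i \<in> f w} (z + \<epsilon>) :: real) = indicator {\<epsilon>. i \<in> f (z + \<epsilon>)}"
        by (auto simp: indicator_def)
      moreover have "{\<epsilon>. i \<in> f (z + \<epsilon>)} \<in> sets (gauss \<sigma>)"
      proof -
        have zm: "(\<lambda>\<epsilon>::'a. z + \<epsilon>) \<in> borel_measurable borel" by measurable
        have "(\<lambda>\<epsilon>. z + \<epsilon>) -` {w. i \<in> f w} \<inter> space borel \<in> sets borel"
          using measurable_sets[OF zm, of "{w. i \<in> f w}"] fm by auto
        then show ?thesis by (simp add: vimage_def)
      qed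
      ultimately show ?thesis by (simp add: emeasure_eq_measure)
    qed
    have "(\<integral>\<epsilon>. h (z + \<epsilon>) \<partial>gauss \<sigma>) = (\<integral>\<epsilon>. (\<Sum>i\<in>U. indicator {w. i \<in> f w} (z + \<epsilon>)) \<partial>gauss \<sigma>) / k'"
      unfolding h_def by simp
    also have "\<dots> = (\<Sum>i\<in>U. (\<integral>\<epsilon>. indicator {w. i \<in> f w} (z + \<epsilon>) \<partial>gauss \<sigma>)) / k'"
      using Bochner_Integration.integral_sum[where I=U and M="gauss \<sigma>" and f="\<lambda>i \<epsilon>. indicator {w. i \<in> f w} (z + \<epsilon>) :: real"] ii by simp
    finally show ?thesis by (simp add: label_prob_int[OF fm])
  qed
  have L: "Phi_shift ((\<Sum>i\<in>U. label_prob f \<sigma> x i) / k') (- norm \<delta> / \<sigma>) \<le> (\<Sum>i\<in>U. label_prob f \<sigma> (x + \<delta>) i) / k'"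
    using NP_gauss(1)[OF s hm h01, of x \<delta>] hint[of x] hint[of "x + \<delta>"] by (simp add: add.assoc)
  have R: "(\<Sum>i\<in>U. label_prob f \<sigma> (x + \<delta>) i) / k' \<le> Phi_shift ((\<Sum>i\<in>U. label_prob f \<sigma> x i) / k') (norm \<delta> / \<sigma>)"
    using NP_gauss(2)[OF s hm h01, of x \<delta>] hint[of x] hint[of "x + \<delta>"] by (simp add: add.assoc)
  have kp: "real k' > 0" using k' by simp
  show "real k' * Phi_shift ((\<Sum>i\<in>U. label_prob f \<sigma> x i) / k') (- norm \<delta> / \<sigma>) \<le> (\<Sum>i\<in>U. label_prob f \<sigma> (x + \<delta>) i)"
    using L kp by (simp add: pos_le_divide_eq mult.commute)
  show "(\<Sum>i\<in>U. label_prob f \<sigma> (x + \<delta>) i) \<le> real k' * Phi_shift ((\<Sum>i\<in>U. label_prob f \<sigma> x i) / k') (norm \<delta> / \<sigma>)"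
    using R kp by (simp add: pos_divide_le_eq mult.commute)
qed


lemma sum_swap:
  fixes g :: "nat \<Rightarrow> real"
  assumes fU: "finite U" and fB: "finite B" and cUB: "card U = card B"
    and hU: "\<And>l. l \<in> U - B \<Longrightarrow> \<theta> \<le> g l" and hB: "\<And>l. l \<in> B - U \<Longrightarrow> g l \<le> \<theta>"
  shows "sum g B \<le> sum g U"
proof -
  have sU: "sum g U = sum g (U \<inter> B) + sum g (U - B)" using fU by (simp add: sum.Int_Diff)
  have sB: "sum g B = sum g (U \<inter> B) + sum g (B - U)"
    using fB by (simp add: sum.Int_Diff[of B g U] Int_commute)
  have c1: "card (U - B) = card U - card (U \<inter> B)" using fU by (simp add: card_Diff_subset_Int)
  have c2: "card (B - U) = card B - card (U \<inter> B)" using fB by (simp add: card_Diff_subset_Int Int_commute)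
  have cc: "card (U - B) = card (B - U)" using c1 c2 cUB by simp
  have "sum g (B - U) \<le> of_nat (card (B - U)) * \<theta>" by (rule sum_bounded_above) (rule hB)
  also have "\<dots> = of_nat (card (U - B)) * \<theta>" using cc by simp
  also have "\<dots> \<le> sum g (U - B)" by (rule sum_bounded_below) (rule hU)
  finally show ?thesis using sU sB by simp
qed

lemma exists_ge_avg:
  fixes q :: "nat \<Rightarrow> real"
  assumes "finite U" "U \<noteq> {}" "X * real (card U) \<le> sum q U"
  shows "\<exists>i\<in>U. X \<le> q i"
proof (rule ccontr)
  assume "\<not> (\<exists>i\<in>U. X \<le> q i)"
  then have "\<And>i. i \<in> U \<Longrightarrow> q i < X" by auto
  then have "sum q U < of_nat (card U) * X"
    using assms by (intro sum_bounded_above_strict) (auto simp: card_gt_0_iff)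
  with assms(3) show False by (simp add: mult.commute)
qed

lemma exists_le_avg:
  fixes q :: "nat \<Rightarrow> real"
  assumes "finite U" "U \<noteq> {}" "sum q U \<le> X * real (card U)"
  shows "\<exists>i\<in>U. q i \<le> X"
proof (rule ccontr)
  assume "\<not> (\<exists>i\<in>U. q i \<le> X)"
  then have "\<And>i. i \<in> U \<Longrightarrow> X < q i" by auto
  then have "sum (\<lambda>_. X) U < sum q U"
    using assms by (intro sum_strict_mono) auto
  then have "of_nat (card U) * X < sum q U" by simp
  with assms(3) show False by (simp add: mult.commute)
qed


lemma key:
  fixes c k k' d :: nat and f :: "'a::euclidean_space \<Rightarrow> nat set"
    and \<sigma> R :: real and x \<delta> :: 'a and L G :: "nat set"
    and a b :: "nat \<Rightarrow> nat" and plow pup :: "nat \<Rightarrow> real" and e' :: nat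
  assumes f_range: "\<forall>w. f w \<subseteq> {1..c} \<and> card (f w) = k'"
    and f_meas: "\<forall>i. {w. i \<in> f w} \<in> sets borel"
    and k'_range: "1 \<le> k'"
    and sigma_pos: "\<sigma> > 0"
    and L_sub: "L \<subseteq> {1..c}" and L_card: "card L = d"
    and plow_bounds: "\<forall>i\<in>L. 0 \<le> plow i \<and> plow i \<le> 1 \<and> plow i \<le> label_prob f \<sigma> x i"
    and pup_bounds: "\<forall>j\<in>{1..c} - L. 0 \<le> pup j \<and> pup j \<le> 1 \<and> label_prob f \<sigma> x j \<le> pup j"
    and a_enum: "bij_betw a {1..d} L"
    and a_sorted: "\<forall>l\<in>{1..d}. \<forall>l'\<in>{1..d}. l \<le> l' \<longrightarrow> plow (a l') \<le> plow (a l)"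
    and b_enum: "bij_betw b {1..c - d} ({1..c} - L)"
    and b_sorted: "\<forall>l\<in>{1..c - d}. \<forall>l'\<in>{1..c - d}. l \<le> l' \<longrightarrow> pup (b l') \<le> pup (b l)"
    and nd: "norm \<delta> \<le> R"
    and G: "is_smoothed_output c f \<sigma> k (x + \<delta>) G"
    and e1: "1 \<le> e'" and ed: "e' \<le> d" and ek: "e' \<le> k"
    and cc: "cert_cond c d k k' \<sigma> R a b plow pup e'"
  shows "e' \<le> card (L \<inter> G)"
proof (rule ccontr)
  assume "\<not> e' \<le> card (L \<inter> G)"
  then have lt: "card (L \<inter> G) < e'" by simp
  define q where "q i = label_prob f \<sigma> (x + \<delta>) i" for i
  define lp where "lp i = label_prob f \<sigma> x i" for i
  define S where "S = L - G"
  define T where "T = G - L"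
  define \<eta> where "\<eta> = d - e' + 1"
  define s where "s = k - e' + 1"
  have Gsub: "G \<subseteq> {1..c}" and Gcard: "card G = k"
    and Gord: "\<And>i j. i \<in> G \<Longrightarrow> j \<in> {1..c} - G \<Longrightarrow> q j \<le> q i"
    using G unfolding is_smoothed_output_def q_def by auto
  have finG: "finite G" using Gsub finite_subset by blast
  have finL: "finite L" using L_sub finite_subset by blast
  have cardS: "card S \<ge> \<eta>"
  proof -
    have "card S = card L - card (L \<inter> G)" unfolding S_def using finL by (simp add: card_Diff_subset_Int)
    then show ?thesis using lt L_card ed by (simp add: \<eta>_def)
  qed
  have cardT: "card T \<ge> s"
  proof -
    have "card T = card G - card (G \<inter> L)" unfolding T_def using finG by (simp add: card_Diff_subset_Int)
    then show ?thesis using lt Gcard ek by (simp add: s_def Int_commute)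
  qed
  have ord: "q i \<le> q j" if "i \<in> S" "j \<in> T" for i j
    using that L_sub Gord unfolding S_def T_def by blast
  have Rdiv: "norm \<delta> / \<sigma> \<le> R / \<sigma>" using nd sigma_pos by (simp add: divide_right_mono)
  define JS where "JS = {l \<in> {1..d}. a l \<in> S}"
  define JT where "JT = {l \<in> {1..c - d}. b l \<in> T}"
  have injA: "inj_on a {1..d}" using a_enum by (rule bij_betw_imp_inj_on)
  have injB: "inj_on b {1..c - d}" using b_enum by (rule bij_betw_imp_inj_on)
  have aJS: "a ` JS = S"
  proof
    show "a ` JS \<subseteq> S" by (auto simp: JS_def)
    show "S \<subseteq> a ` JS"
    proof
      fix i assume "i \<in> S"
      then have "i \<in> L" by (simp add: S_def)
      then obtain l where "l \<in> {1..d}" "a l = i" using a_enum by (auto simp: bij_betw_def)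
      then show "i \<in> a ` JS" using \<open>i \<in> S\<close> by (auto simp: JS_def)
    qed
  qed
  have bJT: "b ` JT = T"
  proof
    show "b ` JT \<subseteq> T" by (auto simp: JT_def)
    show "T \<subseteq> b ` JT"
    proof
      fix j assume "j \<in> T"
      then have "j \<in> {1..c} - L" using Gsub by (auto simp: T_def)
      then obtain l where "l \<in> {1..c - d}" "b l = j" using b_enum unfolding bij_betw_def by (metis imageE)
      then show "j \<in> b ` JT" using \<open>j \<in> T\<close> by (auto simp: JT_def)
    qed
  qed
  have cardJS: "card JS = card S"
    using aJS card_image[OF inj_on_subset[OF injA]] by (metis (no_types, lifting) JS_def mem_Collect_eq subsetI)
  have cardJT: "card JT = card T"
    using bJT card_image[OF inj_on_subset[OF injB]] by (metis (no_types, lifting) JT_def mem_Collect_eq subsetI)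
  have C1: "\<exists>i\<in>S. Phi_shift (plow (a e')) (- R / \<sigma>) \<le> q i"
  proof -
    have "\<exists>l\<in>JS. l \<le> e'"
    proof (rule ccontr)
      assume "\<not> (\<exists>l\<in>JS. l \<le> e')"
      then have "JS \<subseteq> {e'+1..d}" by (auto simp: JS_def)
      then have "card JS \<le> card {e'+1..d}" by (intro card_mono) auto
      then have "card JS \<le> d - e'" by simp
      then show False using cardJS cardS ed by (simp add: \<eta>_def)
    qed
    then obtain l where l: "l \<in> JS" "l \<le> e'" by blast
    have l1: "l \<in> {1..d}" and alS: "a l \<in> S" using l by (auto simp: JS_def)
    have alL: "a l \<in> L" using alS by (simp add: S_def)
    have "plow (a e') \<le> plow (a l)" using a_sorted[rule_format, of l e'] l1 l(2) e1 ed by auto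
    also have "plow (a l) \<le> lp (a l)" using plow_bounds alL by (simp add: lp_def)
    finally have pl: "plow (a e') \<le> lp (a l)" .
    have "Phi_shift (plow (a e')) (- R / \<sigma>) \<le> Phi_shift (plow (a e')) (- norm \<delta> / \<sigma>)"
      by (rule Phi_shift_mono_t) (use Rdiv in simp)
    also have "\<dots> \<le> Phi_shift (lp (a l)) (- norm \<delta> / \<sigma>)" by (rule Phi_shift_mono_p[OF pl])
    also have "\<dots> \<le> q (a l)" unfolding lp_def q_def by (rule NP_single(1)[OF sigma_pos f_meas])
    finally show ?thesis using alS by blast
  qed
  have C2: "\<exists>i\<in>S. real k' / real u * Phi_shift (pA a plow e' u / real k') (- R / \<sigma>) \<le> q i"
    if u: "u \<in> {1..\<eta>}" for u
  proof -
    have u1: "1 \<le> u" "u \<le> \<eta>" using u by auto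
    define N where "N = e' + u - 1"
    have Nd: "N \<le> d" using u1 ed by (simp add: N_def \<eta>_def)
    define JS' where "JS' = JS \<inter> {1..N}"
    have "JS \<subseteq> JS' \<union> {N+1..d}" by (auto simp: JS_def JS'_def)
    then have "card JS \<le> card (JS' \<union> {N+1..d})" by (intro card_mono) (auto simp: JS'_def)
    also have "\<dots> \<le> card JS' + card {N+1..d}" by (rule card_Un_le)
    finally have "card JS \<le> card JS' + (d - N)" by simp
    then have cJS': "u \<le> card JS'" using cardJS cardS u1 Nd ed by (simp add: \<eta>_def N_def)
    obtain U' where U': "U' \<subseteq> JS'" "card U' = u" "finite U'" using obtain_subset_with_card_n[OF cJS'] by blast
    have U'sub: "U' \<subseteq> {1..N}" "U' \<subseteq> JS" using U' by (auto simp: JS'_def)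
    have U'd: "U' \<subseteq> {1..d}" using U'sub by (auto simp: JS_def)
    have swap: "sum (\<lambda>l. plow (a l)) {e'..N} \<le> sum (\<lambda>l. plow (a l)) U'"
    proof (rule sum_swap[where \<theta> = "plow (a e')"])
      show "finite U'" by fact
      show "finite {e'..N}" by simp
      show "card U' = card {e'..N}" using U'(2) u1 e1 by (simp add: N_def)
      show "plow (a e') \<le> plow (a l)" if "l \<in> U' - {e'..N}" for l
      proof -
        have "l \<in> {1..d}" "l \<le> e'" using that U'sub U'd by auto
        then show ?thesis using a_sorted[rule_format, of l e'] e1 ed by auto
      qed
      show "plow (a l) \<le> plow (a e')" if "l \<in> {e'..N} - U'" for l
      proof -
        have "l \<in> {1..d}" "e' \<le> l" using that e1 Nd by auto
        then show ?thesis using a_sorted[rule_format, of e' l] e1 ed by auto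
      qed
    qed
    have pA_eq: "pA a plow e' u = sum (\<lambda>l. plow (a l)) {e'..N}" by (simp add: pA_def N_def)
    define U where "U = a ` U'"
    have injU': "inj_on a U'" using inj_on_subset[OF injA U'd] .
    have cU: "card U = u" using card_image[OF injU'] U'(2) by (simp add: U_def)
    have US: "U \<subseteq> S" using U'sub(2) by (auto simp: U_def JS_def)
    have fU: "finite U" by (simp add: U_def U'(3))
    have Une: "U \<noteq> {}" using cU u1 by auto
    have sumU: "sum plow U = sum (\<lambda>l. plow (a l)) U'" by (simp add: U_def sum.reindex[OF injU'])
    have "sum plow U \<le> sum lp U" using US plow_bounds by (intro sum_mono) (auto simp: S_def lp_def)
    then have pAle: "pA a plow e' u \<le> sum lp U" using swap pA_eq sumU by linarith
    have kp: "real k' > 0" using k'_range by simp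
    have "real k' * Phi_shift (pA a plow e' u / real k') (- R / \<sigma>) \<le> real k' * Phi_shift (sum lp U / real k') (- norm \<delta> / \<sigma>)"
    proof (rule mult_left_mono)
      have "Phi_shift (pA a plow e' u / real k') (- R / \<sigma>) \<le> Phi_shift (pA a plow e' u / real k') (- norm \<delta> / \<sigma>)"
        by (rule Phi_shift_mono_t) (use Rdiv in simp)
      also have "\<dots> \<le> Phi_shift (sum lp U / real k') (- norm \<delta> / \<sigma>)"
        by (rule Phi_shift_mono_p) (use pAle kp in \<open>simp add: divide_right_mono\<close>)
      finally show "Phi_shift (pA a plow e' u / real k') (- R / \<sigma>) \<le> Phi_shift (sum lp U / real k') (- norm \<delta> / \<sigma>)" .
    qed (use kp in simp)
    also have "\<dots> \<le> sum q U" unfolding lp_def q_def by (rule NP_multi(1)[OF sigma_pos f_meas f_range k'_range fU])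
    finally have fin: "real k' * Phi_shift (pA a plow e' u / real k') (- R / \<sigma>) \<le> sum q U" .
    have "real k' / real u * Phi_shift (pA a plow e' u / real k') (- R / \<sigma>) * real (card U)
        = real k' * Phi_shift (pA a plow e' u / real k') (- R / \<sigma>)" using cU u1 by simp
    then obtain i where "i \<in> U" "real k' / real u * Phi_shift (pA a plow e' u / real k') (- R / \<sigma>) \<le> q i"
      using exists_ge_avg[OF fU Une, of "real k' / real u * Phi_shift (pA a plow e' u / real k') (- R / \<sigma>)" q] fin by auto
    then show ?thesis using US by blast
  qed
  have sc: "s \<le> c - d"
  proof (rule ccontr)
    assume ns: "\<not> s \<le> c - d"
    have "card JT \<le> card {1..c-d}" by (intro card_mono) (auto simp: JT_def)
    then show False using cardJT cardT ns by simp
  qed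
  have s1: "1 \<le> s" by (simp add: s_def)
  have C3: "\<exists>j\<in>T. q j \<le> Phi_shift (pbar c d b pup s) (R / \<sigma>)"
  proof -
    have "\<exists>l\<in>JT. s \<le> l"
    proof (rule ccontr)
      assume "\<not> (\<exists>l\<in>JT. s \<le> l)"
      then have "JT \<subseteq> {1..s-1}" by (auto simp: JT_def)
      then have "card JT \<le> s - 1" using card_mono[of "{1..s-1}" JT] by simp
      then show False using cardJT cardT s1 by simp
    qed
    then obtain l where l: "l \<in> JT" "s \<le> l" by blast
    have l1: "l \<in> {1..c-d}" and blT: "b l \<in> T" using l by (auto simp: JT_def)
    have blL: "b l \<in> {1..c} - L" using blT Gsub by (auto simp: T_def)
    have pbar_s: "pbar c d b pup s = pup (b s)" using sc by (simp add: pbar_def)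
    have "lp (b l) \<le> pup (b l)" using pup_bounds blL by (simp add: lp_def)
    also have "pup (b l) \<le> pup (b s)" using b_sorted[rule_format, of s l] s1 sc l1 l(2) by auto
    finally have pl: "lp (b l) \<le> pbar c d b pup s" using pbar_s by simp
    have "q (b l) \<le> Phi_shift (lp (b l)) (norm \<delta> / \<sigma>)" unfolding lp_def q_def by (rule NP_single(2)[OF sigma_pos f_meas])
    also have "\<dots> \<le> Phi_shift (pbar c d b pup s) (norm \<delta> / \<sigma>)" by (rule Phi_shift_mono_p[OF pl])
    also have "\<dots> \<le> Phi_shift (pbar c d b pup s) (R / \<sigma>)" by (rule Phi_shift_mono_t[OF Rdiv])
    finally show ?thesis using blT by blast
  qed
  have C4: "\<exists>j\<in>T. q j \<le> real k' / real v * Phi_shift (pB c d k b pup e' v / real k') (R / \<sigma>)"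
    if v: "v \<in> {1..s}" for v
  proof -
    have v1: "1 \<le> v" "v \<le> s" using v by auto
    define M where "M = s - v + 1"
    have M1: "1 \<le> M" "M \<le> s" using v1 by (auto simp: M_def)
    define JT' where "JT' = JT \<inter> {M..c-d}"
    have "JT \<subseteq> JT' \<union> {1..M-1}" by (auto simp: JT_def JT'_def)
    then have "card JT \<le> card (JT' \<union> {1..M-1})" by (intro card_mono) (auto simp: JT'_def)
    also have "\<dots> \<le> card JT' + card {1..M-1}" by (rule card_Un_le)
    finally have "card JT \<le> card JT' + (M - 1)" by simp
    then have cJT': "v \<le> card JT'" using cardJT cardT v1 by (simp add: M_def)
    obtain V' where V': "V' \<subseteq> JT'" "card V' = v" "finite V'" using obtain_subset_with_card_n[OF cJT'] by blast
    have V'sub: "V' \<subseteq> {M..c-d}" "V' \<subseteq> JT" using V' by (auto simp: JT'_def)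
    have V'cd: "V' \<subseteq> {1..c-d}" using V'sub(2) by (auto simp: JT_def)
    have swap: "sum (\<lambda>l. pup (b l)) V' \<le> sum (\<lambda>l. pup (b l)) {M..s}"
    proof (rule sum_swap[where \<theta> = "pup (b s)"])
      show "finite {M..s}" by simp
      show "finite V'" by fact
      show "card {M..s} = card V'" using V'(2) v1 by (simp add: M_def)
      show "pup (b s) \<le> pup (b l)" if "l \<in> {M..s} - V'" for l
      proof -
        have "l \<in> {1..c-d}" "l \<le> s" using that M1 sc by auto
        then show ?thesis using b_sorted[rule_format, of l s] s1 sc by auto
      qed
      show "pup (b l) \<le> pup (b s)" if "l \<in> V' - {M..s}" for l
      proof -
        have "l \<in> {1..c-d}" "s \<le> l" using that V'sub V'cd by auto
        then show ?thesis using b_sorted[rule_format, of s l] s1 sc by auto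
      qed
    qed
    have pB_eq: "pB c d k b pup e' v = sum (\<lambda>l. pup (b l)) {M..s}"
    proof -
      have "pB c d k b pup e' v = (\<Sum>l = M..s. pbar c d b pup l)" by (simp add: pB_def s_def M_def)
      also have "\<dots> = sum (\<lambda>l. pup (b l)) {M..s}" using sc by (intro sum.cong) (auto simp: pbar_def)
      finally show ?thesis .
    qed
    define V where "V = b ` V'"
    have injV': "inj_on b V'" using inj_on_subset[OF injB V'cd] .
    have cV: "card V = v" using card_image[OF injV'] V'(2) by (simp add: V_def)
    have VT: "V \<subseteq> T" using V'sub(2) by (auto simp: V_def JT_def)
    have fV: "finite V" by (simp add: V_def V'(3))
    have Vne: "V \<noteq> {}" using cV v1 by auto
    have sumV: "sum pup V = sum (\<lambda>l. pup (b l)) V'" by (simp add: V_def sum.reindex[OF injV'])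
    have "sum lp V \<le> sum pup V"
    proof (rule sum_mono)
      fix j assume "j \<in> V"
      then have "j \<in> {1..c} - L" using VT Gsub by (auto simp: T_def)
      then show "lp j \<le> pup j" using pup_bounds by (simp add: lp_def)
    qed
    then have pBge: "sum lp V \<le> pB c d k b pup e' v" using swap pB_eq sumV by linarith
    have kp: "real k' > 0" using k'_range by simp
    have "sum q V \<le> real k' * Phi_shift (sum lp V / real k') (norm \<delta> / \<sigma>)"
      unfolding lp_def q_def by (rule NP_multi(2)[OF sigma_pos f_meas f_range k'_range fV])
    also have "\<dots> \<le> real k' * Phi_shift (pB c d k b pup e' v / real k') (R / \<sigma>)"
    proof (rule mult_left_mono)
      have "Phi_shift (sum lp V / real k') (norm \<delta> / \<sigma>) \<le> Phi_shift (pB c d k b pup e' v / real k') (norm \<delta> / \<sigma>)"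
        by (rule Phi_shift_mono_p) (use pBge kp in \<open>simp add: divide_right_mono\<close>)
      also have "\<dots> \<le> Phi_shift (pB c d k b pup e' v / real k') (R / \<sigma>)"
        by (rule Phi_shift_mono_t[OF Rdiv])
      finally show "Phi_shift (sum lp V / real k') (norm \<delta> / \<sigma>) \<le> Phi_shift (pB c d k b pup e' v / real k') (R / \<sigma>)" .
    qed (use kp in simp)
    finally have fin: "sum q V \<le> real k' * Phi_shift (pB c d k b pup e' v / real k') (R / \<sigma>)" .
    have "real k' / real v * Phi_shift (pB c d k b pup e' v / real k') (R / \<sigma>) * real (card V)
        = real k' * Phi_shift (pB c d k b pup e' v / real k') (R / \<sigma>)" using cV v1 by simp
    then obtain j where "j \<in> V" "q j \<le> real k' / real v * Phi_shift (pB c d k b pup e' v / real k') (R / \<sigma>)"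
      using exists_le_avg[OF fV Vne, of q "real k' / real v * Phi_shift (pB c d k b pup e' v / real k') (R / \<sigma>)"] fin by auto
    then show ?thesis using VT by blast
  qed
  have LB: "\<exists>i\<in>S. max (Phi_shift (plow (a e')) (- R / \<sigma>))
          (Max ((\<lambda>u. real k' / real u * Phi_shift (pA a plow e' u / real k') (- R / \<sigma>)) ` {1..\<eta>})) \<le> q i"
  proof (cases "Max ((\<lambda>u. real k' / real u * Phi_shift (pA a plow e' u / real k') (- R / \<sigma>)) ` {1..\<eta>}) \<le> Phi_shift (plow (a e')) (- R / \<sigma>)")
    case True then show ?thesis using C1 by (simp add: max_def)
  next
    case False
    have "Max ((\<lambda>u. real k' / real u * Phi_shift (pA a plow e' u / real k') (- R / \<sigma>)) ` {1..\<eta>})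
        \<in> (\<lambda>u. real k' / real u * Phi_shift (pA a plow e' u / real k') (- R / \<sigma>)) ` {1..\<eta>}"
      by (rule Max_in) (auto simp: \<eta>_def)
    then obtain u where u: "u \<in> {1..\<eta>}" and "Max ((\<lambda>u. real k' / real u * Phi_shift (pA a plow e' u / real k') (- R / \<sigma>)) ` {1..\<eta>})
        = real k' / real u * Phi_shift (pA a plow e' u / real k') (- R / \<sigma>)" by blast
    then show ?thesis using C2[OF u] False by (simp add: max_def)
  qed
  have UB: "\<exists>j\<in>T. q j \<le> min (Phi_shift (pbar c d b pup s) (R / \<sigma>))
          (Min ((\<lambda>v. real k' / real v * Phi_shift (pB c d k b pup e' v / real k') (R / \<sigma>)) ` {1..s}))"
  proof (cases "Phi_shift (pbar c d b pup s) (R / \<sigma>) \<le> Min ((\<lambda>v. real k' / real v * Phi_shift (pB c d k b pup e' v / real k') (R / \<sigma>)) ` {1..s})")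
    case True then show ?thesis using C3 by (simp add: min_def)
  next
    case False
    have "Min ((\<lambda>v. real k' / real v * Phi_shift (pB c d k b pup e' v / real k') (R / \<sigma>)) ` {1..s})
        \<in> (\<lambda>v. real k' / real v * Phi_shift (pB c d k b pup e' v / real k') (R / \<sigma>)) ` {1..s}"
      by (rule Min_in) (auto simp: s_def)
    then obtain v where v: "v \<in> {1..s}" and "Min ((\<lambda>v. real k' / real v * Phi_shift (pB c d k b pup e' v / real k') (R / \<sigma>)) ` {1..s})
        = real k' / real v * Phi_shift (pB c d k b pup e' v / real k') (R / \<sigma>)" by blast
    then show ?thesis using C4[OF v] False by (simp add: min_def)
  qed
  from LB obtain i where i: "i \<in> S" and iLB: "max (Phi_shift (plow (a e')) (- R / \<sigma>))
          (Max ((\<lambda>u. real k' / real u * Phi_shift (pA a plow e' u / real k') (- R / \<sigma>)) ` {1..\<eta>})) \<le> q i" by blast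
  from UB obtain j where j: "j \<in> T" and jUB: "q j \<le> min (Phi_shift (pbar c d b pup s) (R / \<sigma>))
          (Min ((\<lambda>v. real k' / real v * Phi_shift (pB c d k b pup e' v / real k') (R / \<sigma>)) ` {1..s}))" by blast
  have "q i \<le> q j" by (rule ord[OF i j])
  moreover have "max (Phi_shift (plow (a e')) (- R / \<sigma>))
          (Max ((\<lambda>u. real k' / real u * Phi_shift (pA a plow e' u / real k') (- R / \<sigma>)) ` {1..\<eta>}))
      > min (Phi_shift (pbar c d b pup s) (R / \<sigma>))
          (Min ((\<lambda>v. real k' / real v * Phi_shift (pB c d k b pup e' v / real k') (R / \<sigma>)) ` {1..s}))"
    using cc unfolding cert_cond_def Let_def \<eta>_def s_def by simp
  ultimately show False using iLB jUB by linarith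
qed


theorem theorem1:
  fixes c k k' d :: nat and f :: "'a::euclidean_space \<Rightarrow> nat set"
    and \<sigma> R :: real and x :: 'a and L :: "nat set"
    and a b :: "nat \<Rightarrow> nat" and plow pup :: "nat \<Rightarrow> real"
  assumes c_ge: "c \<ge> 1"
    and f_range: "\<forall>w. f w \<subseteq> {1..c} \<and> card (f w) = k'"
    and f_meas: "\<forall>i. {w. i \<in> f w} \<in> sets borel"
    and k'_range: "1 \<le> k'" "k' \<le> c"
    and k_range: "1 \<le> k" "k \<le> c"
    and sigma_pos: "\<sigma> > 0"
    and L_sub: "L \<subseteq> {1..c}" and L_card: "card L = d" and d_pos: "d \<ge> 1"
    and plow_bounds: "\<forall>i\<in>L. 0 \<le> plow i \<and> plow i \<le> 1 \<and> plow i \<le> label_prob f \<sigma> x i"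
    and pup_bounds: "\<forall>j\<in>{1..c} - L. 0 \<le> pup j \<and> pup j \<le> 1 \<and> label_prob f \<sigma> x j \<le> pup j"
    and a_enum: "bij_betw a {1..d} L"
    and a_sorted: "\<forall>l\<in>{1..d}. \<forall>l'\<in>{1..d}. l \<le> l' \<longrightarrow> plow (a l') \<le> plow (a l)"
    and b_enum: "bij_betw b {1..c - d} ({1..c} - L)"
    and b_sorted: "\<forall>l\<in>{1..c - d}. \<forall>l'\<in>{1..c - d}. l \<le> l' \<longrightarrow> pup (b l') \<le> pup (b l)"
    and pB_bound: "\<forall>e'\<in>{1..min d k}. \<forall>v\<in>{1..k - e' + 1}. pB c d k b pup e' v \<le> real k'"
    and R_nonneg: "R \<ge> 0"
  shows "\<forall>\<delta>::'a. norm \<delta> \<le> R \<longrightarrow>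
           (\<forall>G. is_smoothed_output c f \<sigma> k (x + \<delta>) G \<longrightarrow>
                card (L \<inter> G) \<ge> cert_e c d k k' \<sigma> R a b plow pup)"
proof (intro allI impI)
  fix \<delta> :: 'a and G assume nd: "norm \<delta> \<le> R" and G: "is_smoothed_output c f \<sigma> k (x + \<delta>) G"
  show "cert_e c d k k' \<sigma> R a b plow pup \<le> card (L \<inter> G)"
    unfolding cert_e_def
  proof (rule Max.boundedI)
    show "finite ({0} \<union> {e' \<in> {1..min d k}. cert_cond c d k k' \<sigma> R a b plow pup e'})" by auto
    show "{0} \<union> {e' \<in> {1..min d k}. cert_cond c d k k' \<sigma> R a b plow pup e'} \<noteq> {}" by auto
    fix e' assume "e' \<in> {0} \<union> {e' \<in> {1..min d k}. cert_cond c d k k' \<sigma> R a b plow pup e'}"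
    then consider "e' = 0" | "e' \<in> {1..min d k}" "cert_cond c d k k' \<sigma> R a b plow pup e'" by blast
    then show "e' \<le> card (L \<inter> G)"
    proof cases
      case 1 then show ?thesis by simp
    next
      case 2
      show ?thesis
        by (rule key[OF f_range f_meas k'_range(1) sigma_pos L_sub L_card plow_bounds pup_bounds
              a_enum a_sorted b_enum b_sorted nd G _ _ _ 2(2)]) (use 2(1) in auto)
    qed
  qed
qed


end
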